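(* Let $X$ be an $n$-dimensional real normed space and let $Y \subseteq X$ be a $k$-dimensional linear subspace, where $1 \leq k \leq n-1$. Then: (a) $\dim \mathcal{P}_{\min}(X, Y) \leq k(n-k)$, and this estimate is best possible in general: for all $n$ and $1\le k\le n-1$ there exist an $n$-dimensional real normed space $X$ and a $k$-dimensional subspace $Y$ with $\dim \mathcal{P}_{\min}(X, Y) = k(n-k)$. (b) If $\lambda(Y, X)>1$, then $\dim \mathcal{P}_{\min}(X, Y) \leq k(n-k)-2$, and this estimate is best possible in general: for all $n$ and $2\le k\le n-1$ there exist an $n$-dimensional real normed space $X$ and a $k$-dimensional subspace $Y$ with $\lambda(Y,X)>1$ and $\dim \mathcal{P}_{\min}(X, Y) = k(n-k)-2$.
   Context: A projection from a normed space $X$ onto a linear subspace $Y$ is a bounded linear operator $P: X \to Y$ with $P|_Y = \mathrm{id}_Y$; $\mathcal{P}(X,Y)$ denotes the set of all such projections. The relative projection constant is $\lambda(Y, X) = \inf\{\|P\| : P \in \mathcal{P}(X,Y)\}$ (operator norm), and $\mathcal{P}_{\min}(X, Y)$ is the set of projections $P$ with $\|P\| = \lambda(Y,X)$ (minimal projections). $\mathcal{P}_{\min}(X,Y)$ is a convex subset of the space $\mathcal{L}(X,X)$ of linear operators on $X$, and $\dim \mathcal{P}_{\min}(X,Y)$ denotes its affine dimension, i.e. the smallest dimension of an affine subspace of $\mathcal{L}(X,X)$ containing it. *)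

theory Defs
  imports "HOL-Analysis.Analysis"
begin

text \<open>A norm on the real vector space real^'n (an n-dimensional real normed space is,
  up to isometric isomorphism, real^'n equipped with some norm N).\<close>
definition is_norm :: "('a::real_vector \<Rightarrow> real) \<Rightarrow> bool" where
  "is_norm N \<longleftrightarrow> (\<forall>x. N x = 0 \<longleftrightarrow> x = 0) \<and> (\<forall>c x. N (c *\<^sub>R x) = \<bar>c\<bar> * N x)
     \<and> (\<forall>x y. N (x + y) \<le> N x + N y)"

definition op_norm :: "(real^'n \<Rightarrow> real) \<Rightarrow> real^'n^'n \<Rightarrow> real" where
  "op_norm N A = Sup {N (A *v x) | x. N x \<le> 1}"

definition projections :: "(real^'n) set \<Rightarrow> (real^'n^'n) set" where
  "projections Y = {P. (\<forall>x. P *v x \<in> Y) \<and> (\<forall>y\<in>Y. P *v y = y)}"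

definition rel_proj_const :: "(real^'n \<Rightarrow> real) \<Rightarrow> (real^'n) set \<Rightarrow> real" where
  "rel_proj_const N Y = Inf (op_norm N ` projections Y)"

definition min_projections :: "(real^'n \<Rightarrow> real) \<Rightarrow> (real^'n) set \<Rightarrow> (real^'n^'n) set" where
  "min_projections N Y = {P \<in> projections Y. op_norm N P = rel_proj_const N Y}"

end

theory Submission
  imports Defs
begin

context
  fixes N :: "'a::euclidean_space \<Rightarrow> real"
  assumes nN: "is_norm N"
begin

lemma N_zero: "N 0 = 0"
  using nN unfolding is_norm_def by auto

lemma N_eq0: "N x = 0 \<longleftrightarrow> x = 0"
  using nN unfolding is_norm_def by auto

lemma N_scale: "N (c *\<^sub>R x) = \<bar>c\<bar> * N x"
  using nN unfolding is_norm_def by auto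

lemma N_tri: "N (x + y) \<le> N x + N y"
  using nN unfolding is_norm_def by auto

lemma N_neg: "N (- x) = N x"
  using N_scale[of "-1" x] by simp

lemma N_nonneg: "0 \<le> N x"
proof -
  have "N 0 \<le> N x + N (- x)" using N_tri[of x "-x"] by simp
  then show ?thesis by (simp add: N_zero N_neg)
qed

lemma N_pos: "x \<noteq> 0 \<Longrightarrow> 0 < N x"
  using N_nonneg[of x] N_eq0[of x] by linarith

lemma N_diff_tri: "N (x - y) \<le> N x + N y"
  using N_tri[of x "-y"] by (simp add: N_neg)

lemma N_rev_tri: "\<bar>N x - N y\<bar> \<le> N (x - y)"
proof -
  have "N x \<le> N (x - y) + N y" using N_tri[of "x-y" y] by simp
  moreover have "N y \<le> N (y - x) + N x" using N_tri[of "y-x" x] by simp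
  moreover have "N (y - x) = N (x - y)" using N_neg[of "x - y"] by simp
  ultimately show ?thesis by linarith
qed

lemma N_sum: "N (sum f S) \<le> (\<Sum>i\<in>S. N (f i))"
proof (induction S rule: infinite_finite_induct)
  case (infinite A) then show ?case by (simp add: N_zero)
next
  case empty then show ?case by (simp add: N_zero)
next
  case (insert x F)
  then show ?case using N_tri[of "f x" "sum f F"] by simp
qed

lemma N_upper: "\<exists>C>0. \<forall>x. N x \<le> C * norm x"
proof -
  define C where "C = (\<Sum>b\<in>Basis. N b) + 1"
  have C0: "C > 0" unfolding C_def using N_nonneg by (simp add: sum_nonneg add_nonneg_pos)
  have "N x \<le> C * norm x" for x
  proof -
    have "N x = N (\<Sum>b\<in>Basis. (x \<bullet> b) *\<^sub>R b)" by (simp add: euclidean_representation)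
    also have "\<dots> \<le> (\<Sum>b\<in>Basis. N ((x \<bullet> b) *\<^sub>R b))" by (rule N_sum)
    also have "\<dots> = (\<Sum>b\<in>Basis. \<bar>x \<bullet> b\<bar> * N b)" by (simp add: N_scale)
    also have "\<dots> \<le> (\<Sum>b\<in>Basis. norm x * N b)"
      by (intro sum_mono mult_right_mono Basis_le_norm N_nonneg) auto
    also have "\<dots> = norm x * (\<Sum>b\<in>Basis. N b)" by (simp add: sum_distrib_left)
    also have "\<dots> \<le> C * norm x" unfolding C_def by (simp add: algebra_simps)
    finally show ?thesis .
  qed
  with C0 show ?thesis by blast
qed

lemma N_lipschitz: "\<exists>C>0. \<forall>x y. \<bar>N x - N y\<bar> \<le> C * norm (x - y)"
  using N_upper N_rev_tri by (meson order_trans)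

lemma N_continuous: "continuous_on S N"
proof -
  obtain C where C: "C > 0" "\<And>x y. \<bar>N x - N y\<bar> \<le> C * norm (x - y)" using N_lipschitz by blast
  show ?thesis
  proof (rule continuous_at_imp_continuous_on, intro ballI)
    fix x
    show "isCont N x"
    proof (rule continuous_at_eps_delta[THEN iffD2], intro allI impI)
      fix e :: real assume "e > 0"
      show "\<exists>d>0. \<forall>x'. dist x' x < d \<longrightarrow> dist (N x') (N x) < e"
      proof (intro exI[of _ "e / C"] conjI allI impI)
        show "e / C > 0" using \<open>e > 0\<close> C by simp
        fix x' assume "dist x' x < e / C"
        then have "C * norm (x' - x) < e" using C(1) by (simp add: dist_norm field_simps)
        then show "dist (N x') (N x) < e" using C(2)[of x' x] by (simp add: dist_real_def)
      qed
    qed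
  qed
qed

lemma N_isCont: "isCont N x"
  using N_continuous[of UNIV] by (simp add: continuous_on_eq_continuous_at)

lemma N_lower: "\<exists>c>0. \<forall>x. c * norm x \<le> N x"
proof -
  have "sphere (0::'a) 1 \<noteq> {}"
  proof -
    obtain b :: 'a where "b \<in> Basis" using nonempty_Basis by blast
    then have "b \<in> sphere 0 1" by simp
    then show ?thesis by blast
  qed
  then obtain z where z: "z \<in> sphere 0 1" "\<And>y. y \<in> sphere 0 1 \<Longrightarrow> N z \<le> N y"
    using continuous_attains_inf[OF compact_sphere _ N_continuous] by blast
  have "z \<noteq> 0" using z(1) by auto
  then have cpos: "N z > 0" by (rule N_pos)
  have "N z * norm x \<le> N x" for x
  proof (cases "x = 0")
    case True then show ?thesis by (simp add: N_zero)
  next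
    case False
    then have "(1 / norm x) *\<^sub>R x \<in> sphere 0 1" by simp
    then have "N z \<le> N ((1 / norm x) *\<^sub>R x)" by (rule z(2))
    also have "\<dots> = N x / norm x" by (simp add: N_scale)
    finally show ?thesis using False by (simp add: field_simps)
  qed
  with cpos show ?thesis by blast
qed

lemma N_ball_bounded: "bounded {x. N x \<le> r}"
proof -
  obtain c where c: "c > 0" "\<And>x. c * norm x \<le> N x" using N_lower by blast
  have "norm x \<le> r / c" if "N x \<le> r" for x
    using c(2)[of x] that c(1) by (simp add: field_simps)
  then show ?thesis unfolding bounded_iff by blast
qed

lemma N_ball_closed: "closed {x. N x \<le> r}"
  using closed_Collect_le[OF N_continuous continuous_on_const] by simp

lemma N_ball_compact: "compact {x. N x \<le> r}"
  using N_ball_bounded N_ball_closed by (simp add: compact_eq_bounded_closed)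

end

lemma N_support:
  fixes N :: "'a::euclidean_space \<Rightarrow> real"
  assumes nN: "is_norm N"
  shows "\<exists>a. (\<forall>y. a \<bullet> y \<le> N y) \<and> a \<bullet> z = N z"
proof (cases "z = 0")
  case True then show ?thesis by (intro exI[of _ 0]) (simp add: N_zero[OF nN] N_nonneg[OF nN])
next
  case False
  define S where "S = {y. N y \<le> N z}"
  have cS: "convex S" unfolding S_def
  proof (rule convexI)
    fix x y :: 'a and u v :: real
    assume "x \<in> {y. N y \<le> N z}" "y \<in> {y. N y \<le> N z}" "0 \<le> u" "0 \<le> v" "u + v = 1"
    then have "N (u *\<^sub>R x + v *\<^sub>R y) \<le> u * N x + v * N y"
      using N_tri[OF nN, of "u *\<^sub>R x" "v *\<^sub>R y"] by (simp add: N_scale[OF nN])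
    also have "\<dots> \<le> u * N z + v * N z"
      using \<open>x \<in> _\<close> \<open>y \<in> _\<close> \<open>0 \<le> u\<close> \<open>0 \<le> v\<close> by (intro add_mono mult_left_mono) auto
    also have "\<dots> = (u + v) * N z" by (simp add: algebra_simps)
    finally show "u *\<^sub>R x + v *\<^sub>R y \<in> {y. N y \<le> N z}" using \<open>u + v = 1\<close> by simp
  qed
  have zS: "z \<in> S" unfolding S_def by simp
  have Nzpos: "N z > 0" using N_pos[OF nN False] .
  have "z \<notin> rel_interior S"
  proof
    assume "z \<in> rel_interior S"
    then obtain e where e: "e > 0" "ball z e \<inter> affine hull S \<subseteq> S"
      unfolding mem_rel_interior_ball by blast
    define t where "t = e / (2 * norm z)"
    have tpos: "t > 0" using e False by (simp add: t_def)
    have "0 \<in> S" unfolding S_def using N_zero[OF nN] Nzpos by simp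
    have "(1 + t) *\<^sub>R z \<in> affine hull S"
    proof -
      have "(1 + t) *\<^sub>R z = (1 + t) *\<^sub>R z + (-t) *\<^sub>R 0" by simp
      moreover have "(1 + t) + (-t) = (1::real)" by simp
      ultimately show ?thesis
        using mem_affine[OF affine_affine_hull hull_inc[OF zS] hull_inc[OF \<open>0 \<in> S\<close>]] by metis
    qed
    moreover have "(1 + t) *\<^sub>R z \<in> ball z e"
    proof -
      have "dist z ((1 + t) *\<^sub>R z) = t * norm z" using tpos
        by (simp add: dist_norm algebra_simps)
      also have "\<dots> = e / 2" using False by (simp add: t_def)
      finally show ?thesis using e by simp
    qed
    ultimately have "(1 + t) *\<^sub>R z \<in> S" using e by blast
    then have "(1 + t) * N z \<le> N z" unfolding S_def using tpos by (simp add: N_scale[OF nN])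
    then have "t * N z \<le> 0" by (simp add: algebra_simps)
    then show False using tpos Nzpos by (simp add: mult_le_0_iff)
  qed
  then obtain a where a: "a \<noteq> 0" "\<And>y. y \<in> S \<Longrightarrow> a \<bullet> z \<le> a \<bullet> y"
    using supporting_hyperplane_rel_boundary[OF cS zS] by metis
  define b where "b = - a"
  have b: "\<And>y. N y \<le> N z \<Longrightarrow> b \<bullet> y \<le> b \<bullet> z" using a(2) unfolding S_def b_def by auto
  have "b \<noteq> 0" using a(1) by (simp add: b_def)
  have Nbpos: "N b > 0" using N_pos[OF nN \<open>b \<noteq> 0\<close>] .
  have bzpos: "b \<bullet> z > 0"
  proof -
    have "N ((N z / N b) *\<^sub>R b) = N z" using Nbpos Nzpos by (simp add: N_scale[OF nN])
    then have "b \<bullet> ((N z / N b) *\<^sub>R b) \<le> b \<bullet> z" using b[of "(N z / N b) *\<^sub>R b"] by simp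
    moreover have "b \<bullet> ((N z / N b) *\<^sub>R b) > 0" using Nbpos Nzpos \<open>b \<noteq> 0\<close> by simp
    ultimately show ?thesis by linarith
  qed
  define a' where "a' = (N z / (b \<bullet> z)) *\<^sub>R b"
  have "a' \<bullet> y \<le> N y" for y
  proof (cases "y = 0")
    case True then show ?thesis by (simp add: N_zero[OF nN])
  next
    case False
    have Nypos: "N y > 0" using N_pos[OF nN False] .
    have "N ((N z / N y) *\<^sub>R y) = N z" using Nypos Nzpos by (simp add: N_scale[OF nN])
    then have "b \<bullet> ((N z / N y) *\<^sub>R y) \<le> b \<bullet> z" using b[of "(N z / N y) *\<^sub>R y"] by simp
    then have "(N z / N y) * (b \<bullet> y) \<le> b \<bullet> z" by simp
    then have "N z * (b \<bullet> y) \<le> N y * (b \<bullet> z)" using Nypos by (simp add: field_simps)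
    then have "N z * (b \<bullet> y) / (b \<bullet> z) \<le> N y" using bzpos by (simp add: field_simps)
    then show ?thesis unfolding a'_def by simp
  qed
  moreover have "a' \<bullet> z = N z" unfolding a'_def using bzpos by simp
  ultimately show ?thesis by blast
qed

lemma N_support_abs:
  fixes N :: "'a::euclidean_space \<Rightarrow> real"
  assumes nN: "is_norm N" and a: "\<forall>y. a \<bullet> y \<le> N y"
  shows "\<bar>a \<bullet> y\<bar> \<le> N y"
  using a[rule_format, of y] a[rule_format, of "-y"] N_neg[OF nN, of y] by auto

lemma N_support_bounded:
  fixes N :: "'a::euclidean_space \<Rightarrow> real"
  assumes nN: "is_norm N"
  shows "\<exists>C. \<forall>a. (\<forall>y. a \<bullet> y \<le> N y) \<longrightarrow> norm a \<le> C"
proof -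
  obtain C where C: "C > 0" "\<And>x. N x \<le> C * norm x" using N_upper[OF nN] by blast
  have "norm a \<le> C" if "\<forall>y. a \<bullet> y \<le> N y" for a
  proof -
    have "norm a * norm a = a \<bullet> a" by (simp add: dot_square_norm power2_eq_square)
    also have "\<dots> \<le> N a" using that by simp
    also have "\<dots> \<le> C * norm a" by (rule C(2))
    finally show ?thesis
      by (cases "norm a = 0") (use C in auto)
  qed
  then show ?thesis by blast
qed

context
  fixes N :: "real^'n \<Rightarrow> real"
  assumes nN: "is_norm N"
begin

lemma op_bdd: "bdd_above {N (A *v x) | x. N x \<le> 1}"
proof -
  obtain C where C: "C > 0" "\<And>x. N x \<le> C * norm x" using N_upper[OF nN] by blast
  obtain c where c: "c > 0" "\<And>x. c * norm x \<le> N x" using N_lower[OF nN] by blast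
  obtain K where K: "\<And>x. norm (A *v x) \<le> norm x * K"
    using bounded_linear.bounded[OF matrix_vector_mul_bounded_linear[of A]] by blast
  have "N (A *v x) \<le> C * ((1 / c) * \<bar>K\<bar>)" if "N x \<le> 1" for x
  proof -
    have nx: "norm x \<le> 1 / c" using c(2)[of x] that c(1) by (simp add: field_simps)
    have "N (A *v x) \<le> C * norm (A *v x)" by (rule C(2))
    also have "\<dots> \<le> C * (norm x * K)" using K[of x] C(1) by simp
    also have "\<dots> \<le> C * ((1 / c) * \<bar>K\<bar>)"
    proof -
      have "norm x * K \<le> norm x * \<bar>K\<bar>" by (simp add: mult_left_mono)
      also have "\<dots> \<le> (1 / c) * \<bar>K\<bar>" using nx by (intro mult_right_mono) auto
      finally have "norm x * K \<le> (1 / c) * \<bar>K\<bar>" .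
      then show ?thesis using C(1) by (intro mult_left_mono) auto
    qed
    finally show ?thesis .
  qed
  then show ?thesis unfolding bdd_above_def by blast
qed

lemma op_ne: "{N (A *v x) | x. N x \<le> (1::real)} \<noteq> {}"
proof -
  have "N (A *v 0) \<in> {N (A *v x) | x. N x \<le> (1::real)}" using N_zero[OF nN] by (intro CollectI exI[of _ 0]) simp
  then show ?thesis by blast
qed

lemma op_upper: "N x \<le> 1 \<Longrightarrow> N (A *v x) \<le> op_norm N A"
  unfolding op_norm_def by (rule cSup_upper[OF _ op_bdd]) blast

lemma op_nonneg: "0 \<le> op_norm N A"
  using op_upper[of 0 A] N_zero[OF nN] by (simp add: matrix_vector_mult_0_right)

lemma op_scaled: "N (A *v x) \<le> op_norm N A * N x"
proof (cases "x = 0")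
  case True then show ?thesis by (simp add: N_zero[OF nN] matrix_vector_mult_0_right)
next
  case False
  have Nx: "N x > 0" using N_pos[OF nN False] .
  have "N ((1 / N x) *\<^sub>R x) \<le> 1" using Nx by (simp add: N_scale[OF nN])
  then have "N (A *v ((1 / N x) *\<^sub>R x)) \<le> op_norm N A" by (rule op_upper)
  then have "N x \<noteq> 0 \<Longrightarrow> N (A *v x) / N x \<le> op_norm N A"
    using Nx by (simp add: matrix_vector_mult_scaleR N_scale[OF nN])
  then show ?thesis using Nx by (simp add: field_simps)
qed

lemma op_least: "(\<And>x. N x \<le> 1 \<Longrightarrow> N (A *v x) \<le> b) \<Longrightarrow> op_norm N A \<le> b"
  unfolding op_norm_def by (rule cSup_least[OF op_ne]) blast

lemma op_attained: "\<exists>x. N x \<le> 1 \<and> N (A *v x) = op_norm N A"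
proof -
  have cont: "continuous_on {x. N x \<le> 1} (\<lambda>x. N (A *v x))"
    by (rule continuous_on_compose2[OF N_continuous[OF nN, of UNIV]]) (auto intro: continuous_intros)
  have "0 \<in> {x. N x \<le> (1::real)}" using N_zero[OF nN] by simp
  then have "{x. N x \<le> (1::real)} \<noteq> {}" by blast
  then obtain x where x: "N x \<le> 1" "\<And>y. N y \<le> 1 \<Longrightarrow> N (A *v y) \<le> N (A *v x)"
    using continuous_attains_sup[OF N_ball_compact[OF nN] _ cont] by blast
  have "op_norm N A \<le> N (A *v x)" by (rule op_least) (rule x(2))
  moreover have "N (A *v x) \<le> op_norm N A" by (rule op_upper[OF x(1)])
  ultimately show ?thesis using x(1) by (intro exI[of _ x]) auto
qed

lemma op_convex:
  assumes "0 \<le> u" "0 \<le> v" "u + v = 1"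
  shows "op_norm N (u *\<^sub>R A + v *\<^sub>R B) \<le> u * op_norm N A + v * op_norm N B"
proof (rule op_least)
  fix x assume x: "N x \<le> 1"
  have "N ((u *\<^sub>R A + v *\<^sub>R B) *v x) = N (u *\<^sub>R (A *v x) + v *\<^sub>R (B *v x))"
    by (simp add: matrix_vector_mult_add_rdistrib scaleR_matrix_vector_assoc)
  also have "\<dots> \<le> u * N (A *v x) + v * N (B *v x)"
    using N_tri[OF nN, of "u *\<^sub>R (A *v x)" "v *\<^sub>R (B *v x)"] assms by (simp add: N_scale[OF nN])
  also have "\<dots> \<le> u * op_norm N A + v * op_norm N B"
    using assms op_upper[OF x, of A] op_upper[OF x, of B] by (intro add_mono mult_left_mono) auto
  finally show "N ((u *\<^sub>R A + v *\<^sub>R B) *v x) \<le> u * op_norm N A + v * op_norm N B" .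
qed

end

definition Dsp :: "(real^'n) set \<Rightarrow> (real^'n^'n) set" where
  "Dsp Y = {D. (\<forall>x. D *v x \<in> Y) \<and> (\<forall>y\<in>Y. D *v y = 0)}"

definition outer :: "real^'n \<Rightarrow> real^'n \<Rightarrow> real^'n^'n" where
  "outer u w = (\<chi> i j. u$i * w$j)"

lemma outer_mv: "outer u w *v x = (w \<bullet> x) *\<^sub>R u"
  by (simp add: vec_eq_iff outer_def matrix_vector_mult_def inner_vec_def sum_distrib_left
      sum_distrib_right algebra_simps)

lemma outer_add1: "outer (u + v) w = outer u w + outer v w"
  by (simp add: vec_eq_iff outer_def algebra_simps)

lemma outer_scale1: "outer (c *\<^sub>R u) w = c *\<^sub>R outer u w"
  by (simp add: vec_eq_iff outer_def algebra_simps)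

lemma outer_sum1: "outer (\<Sum>i\<in>S. f i) w = (\<Sum>i\<in>S. outer (f i) w)"
  by (induction S rule: infinite_finite_induct)
     (auto simp: outer_add1 vec_eq_iff outer_def distrib_right)

lemma mv_sum_left: "(\<Sum>i\<in>S. A i) *v x = (\<Sum>i\<in>S. A i *v x)"
  by (induction S rule: infinite_finite_induct)
     (auto simp: matrix_vector_mult_add_rdistrib)

lemma Dsp_subspace: "subspace Y \<Longrightarrow> subspace (Dsp Y)"
  unfolding subspace_def Dsp_def
  by (auto simp: matrix_vector_mult_add_rdistrib scaleR_matrix_vector_assoc[symmetric])

lemma outer_in_Dsp:
  assumes "subspace Y" "u \<in> Y" "\<And>y. y \<in> Y \<Longrightarrow> w \<bullet> y = 0"
  shows "outer u w \<in> Dsp Y"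
  using assms unfolding Dsp_def by (auto simp: outer_mv subspace_scale)

lemma proj_diff:
  assumes "subspace Y" "P \<in> projections Y" "Q \<in> projections Y"
  shows "Q - P \<in> Dsp Y"
  using assms unfolding Dsp_def projections_def
  by (auto simp: matrix_vector_mult_diff_rdistrib subspace_diff)

lemma proj_add:
  assumes "subspace Y" "P \<in> projections Y" "D \<in> Dsp Y"
  shows "P + D \<in> projections Y"
  using assms unfolding Dsp_def projections_def
  by (auto simp: matrix_vector_mult_add_rdistrib subspace_add)

lemma rel_le:
  assumes "is_norm N" "P \<in> projections Y"
  shows "rel_proj_const N Y \<le> op_norm N P"
  unfolding rel_proj_const_def
  by (rule cInf_lower) (use assms op_nonneg[OF assms(1)] in \<open>auto simp: bdd_below_def\<close>)

lemma rel_ge: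
  assumes "projections Y \<noteq> {}" "\<And>P. P \<in> projections Y \<Longrightarrow> b \<le> op_norm N P"
  shows "b \<le> rel_proj_const N Y"
  unfolding rel_proj_const_def
  by (rule cInf_greatest) (use assms in auto)

lemma minp_sub: "min_projections N Y \<subseteq> projections Y"
  unfolding min_projections_def by auto

lemma minp_convex:
  fixes Y :: "(real^'n) set"
  assumes nN: "is_norm N" and Y: "subspace Y"
  shows "convex (min_projections N Y)"
proof (rule convexI)
  fix P Q :: "real^'n^'n" and u v :: real
  assume P: "P \<in> min_projections N Y" and Q: "Q \<in> min_projections N Y"
    and uv: "0 \<le> u" "0 \<le> v" "u + v = 1"
  have Pp: "P \<in> projections Y" and Qp: "Q \<in> projections Y" using P Q minp_sub by auto
  have R: "u *\<^sub>R P + v *\<^sub>R Q \<in> projections Y"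
  proof -
    have "u *\<^sub>R P + v *\<^sub>R Q = P + v *\<^sub>R (Q - P)" using uv
      by (simp add: algebra_simps) (metis add_diff_cancel_left' scaleR_add_left scaleR_one)
    moreover have "v *\<^sub>R (Q - P) \<in> Dsp Y"
      using proj_diff[OF Y Pp Qp] subspace_scale[OF Dsp_subspace[OF Y]] by blast
    ultimately show ?thesis using proj_add[OF Y Pp] by simp
  qed
  have "op_norm N (u *\<^sub>R P + v *\<^sub>R Q) \<le> u * op_norm N P + v * op_norm N Q"
    by (rule op_convex[OF nN uv])
  also have "\<dots> = rel_proj_const N Y" using P Q uv unfolding min_projections_def
    by (simp add: algebra_simps) (metis distrib_right mult_1)
  finally have "op_norm N (u *\<^sub>R P + v *\<^sub>R Q) \<le> rel_proj_const N Y" .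
  moreover have "rel_proj_const N Y \<le> op_norm N (u *\<^sub>R P + v *\<^sub>R Q)" by (rule rel_le[OF nN R])
  ultimately show "u *\<^sub>R P + v *\<^sub>R Q \<in> min_projections N Y"
    unfolding min_projections_def using R by auto
qed

lemma orthonormal_expand:
  fixes B :: "'a::euclidean_space set"
  assumes "finite B" "pairwise orthogonal B" "\<And>b. b \<in> B \<Longrightarrow> norm b = 1" "w \<in> span B"
  shows "w = (\<Sum>b\<in>B. (b \<bullet> w) *\<^sub>R b)"
proof -
  obtain c where c: "w = (\<Sum>b\<in>B. c b *\<^sub>R b)" using assms(4) span_finite[OF assms(1)] by auto
  have "b0 \<bullet> w = c b0" if "b0 \<in> B" for b0
  proof -
    have "b0 \<bullet> w = (\<Sum>b\<in>B. c b * (b0 \<bullet> b))" unfolding c by (simp add: inner_sum_right)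
    also have "\<dots> = (\<Sum>b\<in>{b0}. c b * (b0 \<bullet> b))"
      by (rule sum.mono_neutral_right) (use assms(1,2) that in \<open>auto simp: pairwise_def orthogonal_def\<close>)
    also have "\<dots> = c b0" using assms(3)[OF that] by (simp add: dot_square_norm)
    finally show ?thesis .
  qed
  then have "(\<Sum>b\<in>B. (b \<bullet> w) *\<^sub>R b) = (\<Sum>b\<in>B. c b *\<^sub>R b)" by (intro sum.cong) auto
  with c show ?thesis by simp
qed

lemma dim_Dsp_le:
  fixes Y :: "(real^'n::finite) set"
  assumes Y: "subspace Y"
  shows "dim (Dsp Y) \<le> dim Y * (CARD('n) - dim Y)"
proof -
  obtain BY where BY: "BY \<subseteq> Y" "independent BY" "Y \<subseteq> span BY" "card BY = dim Y"
    using basis_exists[of Y] by blast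
  have fBY: "finite BY" using BY(2) by (simp add: independent_imp_finite)
  define Z where "Z = {z::real^'n. \<forall>y\<in>Y. orthogonal y z}"
  have sZ: "subspace Z" unfolding Z_def subspace_def orthogonal_def
    by (auto simp: inner_add_right)
  have dZ: "dim Z + dim Y = CARD('n)"
    using dim_subspace_orthogonal_to_vectors[OF Y subspace_UNIV, of] unfolding Z_def
    by simp
  obtain BZ where BZ: "BZ \<subseteq> Z" "pairwise orthogonal BZ" "\<And>x. x \<in> BZ \<Longrightarrow> norm x = 1"
    "independent BZ" "card BZ = dim Z" "span BZ = Z"
    using orthonormal_basis_subspace[OF sZ] by metis
  have fBZ: "finite BZ" using BZ(4) by (simp add: independent_imp_finite)
  define G where "G = (\<lambda>(y, z). outer y z) ` (BY \<times> BZ)"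
  have fG: "finite G" unfolding G_def using fBY fBZ by simp
  have cG: "card G \<le> dim Y * (CARD('n) - dim Y)"
  proof -
    have "card G \<le> card (BY \<times> BZ)" unfolding G_def by (rule card_image_le) (use fBY fBZ in simp)
    also have "\<dots> = dim Y * dim Z" using BY(4) BZ(5) by (simp add: card_cartesian_product)
    also have "\<dots> = dim Y * (CARD('n) - dim Y)" using dZ by (metis add_diff_cancel_right')
    finally show ?thesis .
  qed
  have "Dsp Y \<subseteq> span G"
  proof
    fix D assume D: "D \<in> Dsp Y"
    have eq: "D = (\<Sum>z\<in>BZ. outer (D *v z) z)"
    proof (subst matrix_eq, intro allI)
      fix x :: "real^'n"
      obtain y w where yw: "y \<in> span Y" "\<And>v. v \<in> span Y \<Longrightarrow> orthogonal w v" "x = y + w"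
        using orthogonal_subspace_decomp_exists[of Y x] by metis
      have yY: "y \<in> Y" using yw(1) span_eq_iff Y by blast
      have wZ: "w \<in> Z" unfolding Z_def using yw(2) span_superset[of Y]
        by (auto simp: orthogonal_commute)
      have Dy: "D *v y = 0" using D yY unfolding Dsp_def by auto
      have zy: "z \<bullet> y = 0" if "z \<in> BZ" for z
        using that BZ(1) yY unfolding Z_def orthogonal_def by (auto simp: inner_commute)
      have wexp: "w = (\<Sum>z\<in>BZ. (z \<bullet> w) *\<^sub>R z)"
        by (rule orthonormal_expand[OF fBZ BZ(2,3)]) (use wZ BZ(6) in auto)
      have "D *v x = D *v w" using yw(3) Dy by (simp add: matrix_vector_right_distrib)
      also have "\<dots> = (\<Sum>z\<in>BZ. (z \<bullet> w) *\<^sub>R (D *v z))"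
        by (subst wexp) (simp add: linear_sum[OF matrix_vector_mul_linear] o_def matrix_vector_mult_scaleR)
      also have "\<dots> = (\<Sum>z\<in>BZ. (z \<bullet> x) *\<^sub>R (D *v z))"
        using zy yw(3) by (intro sum.cong) (auto simp: inner_add_right)
      also have "\<dots> = (\<Sum>z\<in>BZ. outer (D *v z) z) *v x"
        by (simp add: mv_sum_left outer_mv)
      finally show "D *v x = (\<Sum>z\<in>BZ. outer (D *v z) z) *v x" .
    qed
    have "outer (D *v z) z \<in> span G" if z: "z \<in> BZ" for z
    proof -
      have "D *v z \<in> span BY" using D BY(3) unfolding Dsp_def by auto
      then obtain c where c: "D *v z = (\<Sum>y\<in>BY. c y *\<^sub>R y)" using span_finite[OF fBY] by auto
      have "outer (D *v z) z = (\<Sum>y\<in>BY. c y *\<^sub>R outer y z)"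
        unfolding c by (simp add: outer_sum1 outer_scale1)
      also have "\<dots> \<in> span G"
      proof (intro span_sum span_scale span_base)
        fix y assume "y \<in> BY"
        then show "outer y z \<in> G" unfolding G_def using z by force
      qed
      finally show ?thesis .
    qed
    then have "(\<Sum>z\<in>BZ. outer (D *v z) z) \<in> span G" by (intro span_sum)
    with eq show "D \<in> span G" by simp
  qed
  then have "dim (Dsp Y) \<le> card G" using dim_le_card[OF _ fG] by blast
  with cG show ?thesis by linarith
qed

lemma mv_neg: "(- D) *v x = - (D *v x)" for D :: "real^'n^'m"
  by (simp add: vec_eq_iff matrix_vector_mult_def sum_negf)

lemma main_b:
  fixes N :: "real^'n \<Rightarrow> real" and Y :: "(real^'n) set"
  assumes nN: "is_norm N" and Y: "subspace Y" and lam: "rel_proj_const N Y > 1"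
    and mpos: "dim (Dsp Y) \<le> m" "1 \<le> m"
  shows "aff_dim (min_projections N Y) \<le> int m - 2"
proof (rule ccontr)
  let ?M = "min_projections N Y"
  let ?l = "rel_proj_const N Y"
  assume "\<not> aff_dim ?M \<le> int m - 2"
  then have A: "aff_dim ?M \<ge> int m - 1" by simp
  have "?M \<noteq> {}" using A mpos by auto
  then obtain P0 where P0ri: "P0 \<in> rel_interior ?M"
    using rel_interior_eq_empty[OF minp_convex[OF nN Y]] by blast
  then obtain e0 where e0: "e0 > 0" "ball P0 e0 \<inter> affine hull ?M \<subseteq> ?M" and P0M: "P0 \<in> ?M"
    unfolding mem_rel_interior_ball by blast
  have P0p: "P0 \<in> projections Y" and P0n: "op_norm N P0 = ?l"
    using P0M unfolding min_projections_def by auto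
  define L where "L = span ((\<lambda>P. P - P0) ` ?M)"
  have sL: "subspace L" unfolding L_def by simp
  have dimL: "int (dim L) \<ge> int m - 1"
  proof -
    have "aff_dim ?M = int (dim ((\<lambda>x. x - P0) ` ?M))"
      by (rule aff_dim_eq_dim_subtract) (rule hull_inc[OF P0M])
    then show ?thesis using A unfolding L_def by simp
  qed
  have LD: "L \<subseteq> Dsp Y" unfolding L_def
    by (rule span_minimal) (use proj_diff[OF Y P0p] minp_sub Dsp_subspace[OF Y] in auto)
  have K1: "\<exists>\<epsilon>>0. P0 + \<epsilon> *\<^sub>R D \<in> ?M" if D: "D \<in> L" for D
  proof -
    define \<epsilon> where "\<epsilon> = e0 / (2 * (norm D + 1))"
    have nD1: "norm D + 1 > 0" using norm_ge_zero[of D] by linarith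
    have epos: "\<epsilon> > 0" using e0 nD1 unfolding \<epsilon>_def by simp
    have "P0 + \<epsilon> *\<^sub>R D \<in> affine hull ?M"
    proof -
      have eq: "(\<lambda>x. - P0 + x) ` (?M - {P0}) \<union> {0} = (\<lambda>P. P - P0) ` ?M \<union> {0}"
        by auto
      have "span ((\<lambda>x. - P0 + x) ` (?M - {P0})) = L"
        unfolding L_def
        by (metis (no_types, lifting) eq span_insert_0 insert_is_Un sup_commute)
      then have "affine hull ?M = (\<lambda>x. P0 + x) ` L"
        using affine_hull_span2[OF P0M] by simp
      moreover have "\<epsilon> *\<^sub>R D \<in> L" using D sL by (simp add: subspace_scale)
      ultimately show ?thesis by blast
    qed
    moreover have "P0 + \<epsilon> *\<^sub>R D \<in> ball P0 e0"
    proof -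
      have "dist P0 (P0 + \<epsilon> *\<^sub>R D) = \<epsilon> * norm D" using epos by (simp add: dist_norm)
      also have "\<dots> < e0"
      proof -
        have "\<epsilon> * norm D \<le> \<epsilon> * (norm D + 1)" using epos by simp
        also have "\<dots> = e0 / 2" unfolding \<epsilon>_def using nD1 by (simp add: field_simps)
        finally show ?thesis using e0 by simp
      qed
      finally show ?thesis by simp
    qed
    ultimately show ?thesis using e0 epos by blast
  qed
  define np where "np x a \<longleftrightarrow> N x \<le> 1 \<and> (\<forall>y. a \<bullet> y \<le> N y) \<and> a \<bullet> (P0 *v x) = ?l" for x a
  have K2: "a \<bullet> (D *v x) = 0" if "np x a" "D \<in> L" for x a D
  proof -
    have step: "a \<bullet> (E *v x) \<le> 0" if E: "E \<in> L" for E
    proof -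
      obtain \<epsilon> where e: "\<epsilon> > 0" "P0 + \<epsilon> *\<^sub>R E \<in> ?M" using K1[OF E] by blast
      have "a \<bullet> ((P0 + \<epsilon> *\<^sub>R E) *v x) \<le> N ((P0 + \<epsilon> *\<^sub>R E) *v x)" using \<open>np x a\<close> np_def by blast
      also have "\<dots> \<le> op_norm N (P0 + \<epsilon> *\<^sub>R E)" by (rule op_upper[OF nN]) (use \<open>np x a\<close> np_def in blast)
      also have "\<dots> = ?l" using e(2) unfolding min_projections_def by simp
      finally have "a \<bullet> (P0 *v x) + \<epsilon> * (a \<bullet> (E *v x)) \<le> ?l"
        by (simp add: matrix_vector_mult_add_rdistrib scaleR_matrix_vector_assoc[symmetric] inner_add_right)
      then have "\<epsilon> * (a \<bullet> (E *v x)) \<le> 0" using \<open>np x a\<close> np_def by simp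
      then show ?thesis using e(1) by (simp add: mult_le_0_iff)
    qed
    have "-D \<in> L" using that(2) sL by (simp add: subspace_neg)
    from step[OF that(2)] step[OF this] show ?thesis by (simp add: mv_neg)
  qed
  have lpos: "?l > 0" using lam by simp
  have P0Y: "P0 *v x \<in> Y" for x using P0p unfolding projections_def by auto
  have P0id: "P0 *v y = y" if "y \<in> Y" for y using P0p that unfolding projections_def by auto
  have K3: "\<exists>p. x - p \<in> Y \<and> (\<forall>y\<in>Y. p \<bullet> y = 0) \<and> p \<noteq> 0" if "np x a" for x a
  proof -
    obtain y p where yp: "y \<in> span Y" "\<And>w. w \<in> span Y \<Longrightarrow> orthogonal p w" "x = y + p"
      using orthogonal_subspace_decomp_exists[of Y x] by metis
    have yY: "y \<in> Y" using yp(1) span_eq_iff Y by blast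
    have po: "\<forall>w\<in>Y. p \<bullet> w = 0" using yp(2) span_superset[of Y] unfolding orthogonal_def by blast
    have "p \<noteq> 0"
    proof
      assume "p = 0"
      then have "x \<in> Y" using yY yp(3) by simp
      then have "a \<bullet> (P0 *v x) = a \<bullet> x" using P0id by simp
      also have "\<dots> \<le> N x" using \<open>np x a\<close> np_def by blast
      also have "\<dots> \<le> 1" using \<open>np x a\<close> np_def by blast
      finally show False using \<open>np x a\<close> lam np_def by simp
    qed
    moreover have "x - p \<in> Y" using yY yp(3) by simp
    ultimately show ?thesis using po by blast
  qed
  have K3': "\<exists>D\<in>Dsp Y. a \<bullet> (D *v x) = ?l" if npxa: "np x a" for x a
  proof -
    obtain p where p: "x - p \<in> Y" "\<forall>y\<in>Y. p \<bullet> y = 0" "p \<noteq> 0" using K3[OF npxa] by blast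
    have px: "p \<bullet> x = p \<bullet> p"
    proof -
      have "p \<bullet> (x - p) = 0" using p by blast
      then show ?thesis by (simp add: inner_diff_right)
    qed
    define D where "D = outer (P0 *v x) ((1 / (p \<bullet> p)) *\<^sub>R p)"
    have "D \<in> Dsp Y" unfolding D_def by (rule outer_in_Dsp[OF Y P0Y]) (use p in auto)
    moreover have "a \<bullet> (D *v x) = ?l" unfolding D_def outer_mv using px p(3) \<open>np x a\<close> np_def by simp
    ultimately show ?thesis by blast
  qed
  obtain x1 where x1: "N x1 \<le> 1" "N (P0 *v x1) = ?l" using op_attained[OF nN, of P0] P0n by auto
  obtain a1 where a1: "\<forall>y. a1 \<bullet> y \<le> N y" "a1 \<bullet> (P0 *v x1) = N (P0 *v x1)"
    using N_support[OF nN] by blast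
  have np1: "np x1 a1" unfolding np_def using x1 a1 by simp
  obtain Dt where Dt: "Dt \<in> Dsp Y" "a1 \<bullet> (Dt *v x1) = ?l" using K3'[OF np1] by blast
  have DtL: "Dt \<notin> L" using K2[OF np1] Dt(2) lpos by auto
  have K4: "\<exists>t. D - t *\<^sub>R Dt \<in> L" if D: "D \<in> Dsp Y" for D
  proof -
    have sub: "insert Dt L \<subseteq> Dsp Y" using Dt(1) LD by blast
    have spL: "span L = L" using span_eq_iff sL by blast
    have "Dt \<notin> span L" by (subst spL) (rule DtL)
    then have "dim (insert Dt L) = dim L + 1" by (simp add: dim_insert)
    then have "dim (Dsp Y) \<le> dim (insert Dt L)" using dimL mpos by linarith
    then have "span (insert Dt L) = span (Dsp Y)" by (rule dim_eq_span[OF sub])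
    then have "D \<in> span (insert Dt L)" using D span_eq_iff Dsp_subspace[OF Y] by blast
    then obtain t where "D - t *\<^sub>R Dt \<in> span L" using span_breakdown_eq by blast
    then show ?thesis using span_eq_iff sL by blast
  qed
  have K5: "(a \<bullet> (D *v x)) * ?l = (a1 \<bullet> (D *v x1)) * (a \<bullet> (Dt *v x))"
    if npxa: "np x a" and DD: "D \<in> Dsp Y" for x a D
  proof -
    obtain t where t: "D - t *\<^sub>R Dt \<in> L" using K4[OF DD] by blast
    have "a \<bullet> ((D - t *\<^sub>R Dt) *v x) = 0" by (rule K2[OF npxa t])
    then have e1: "a \<bullet> (D *v x) = t * (a \<bullet> (Dt *v x))"
      by (simp add: matrix_vector_mult_diff_rdistrib scaleR_matrix_vector_assoc[symmetric] inner_diff_right)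
    have "a1 \<bullet> ((D - t *\<^sub>R Dt) *v x1) = 0" by (rule K2[OF np1 t])
    then have e2: "a1 \<bullet> (D *v x1) = t * ?l" using Dt(2)
      by (simp add: matrix_vector_mult_diff_rdistrib scaleR_matrix_vector_assoc[symmetric] inner_diff_right)
    show ?thesis using e1 e2 by simp
  qed
  have K5': "a \<bullet> (Dt *v x) \<noteq> 0" if npxa: "np x a" for x a
  proof
    assume z: "a \<bullet> (Dt *v x) = 0"
    obtain D where D: "D \<in> Dsp Y" "a \<bullet> (D *v x) = ?l" using K3'[OF npxa] by blast
    from K5[OF npxa D(1)] z D(2) lpos show False by simp
  qed
  have K6: False if np2: "np x2 a2" and neg: "a2 \<bullet> (Dt *v x2) < 0" for x2 a2
  proof -
    define \<beta> where "\<beta> = a2 \<bullet> (Dt *v x2)"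
    have bneg: "\<beta> < 0" using neg \<beta>_def by simp
    have rel: "(a2 \<bullet> (D *v x2)) * ?l = (a1 \<bullet> (D *v x1)) * \<beta>" if "D \<in> Dsp Y" for D
      using K5[OF np2 that] \<beta>_def by simp
    obtain p1 where p1: "x1 - p1 \<in> Y" "\<forall>y\<in>Y. p1 \<bullet> y = 0" "p1 \<noteq> 0" using K3[OF np1] by blast
    obtain p2 where p2: "x2 - p2 \<in> Y" "\<forall>y\<in>Y. p2 \<bullet> y = 0" "p2 \<noteq> 0" using K3[OF np2] by blast
    have p1x1: "p1 \<bullet> x1 = p1 \<bullet> p1"
    proof -
      have "p1 \<bullet> (x1 - p1) = 0" using p1 by blast
      then show ?thesis by (simp add: inner_diff_right)
    qed
    have p1x2: "p1 \<bullet> x2 = p1 \<bullet> p2"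
    proof -
      have "p1 \<bullet> (x2 - p2) = 0" using p1 p2 by blast
      then show ?thesis by (simp add: inner_diff_right)
    qed
    have p11: "p1 \<bullet> p1 > 0" using p1(3) by simp
    define c where "c = (p2 \<bullet> p1) / (p1 \<bullet> p1)"
    define r where "r = p2 - c *\<^sub>R p1"
    have rY: "\<forall>y\<in>Y. r \<bullet> y = 0" using p1(2) p2(2) unfolding r_def by (simp add: inner_diff_left)
    have rp1: "r \<bullet> p1 = 0" unfolding r_def c_def using p11 by (simp add: inner_diff_left)
    have rx1: "r \<bullet> x1 = 0"
    proof -
      have "r \<bullet> (x1 - p1) = 0" using rY p1(1) by blast
      then show ?thesis using rp1 by (simp add: inner_diff_right)
    qed
    have l2: "a2 \<bullet> (P0 *v x2) = ?l" using np2 np_def by blast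
    have "outer (P0 *v x2) r \<in> Dsp Y" by (rule outer_in_Dsp[OF Y P0Y]) (use rY in auto)
    from rel[OF this] have "(r \<bullet> x2) * ?l * ?l = 0" using rx1 l2 by (simp add: outer_mv)
    then have rx2: "r \<bullet> x2 = 0" using lpos by simp
    have rp2: "r \<bullet> p2 = 0"
    proof -
      have "r \<bullet> (x2 - p2) = 0" using rY p2(1) by blast
      then show ?thesis using rx2 by (simp add: inner_diff_right)
    qed
    have "r \<bullet> r = 0" using rp1 rp2 by (simp add: r_def inner_diff_right)
    then have "r = 0" by simp
    then have p2c: "p2 = c *\<^sub>R p1" unfolding r_def by simp
    have c0: "c \<noteq> 0" using p2c p2(3) by auto
    have relu: "c * (a2 \<bullet> u) * ?l = (a1 \<bullet> u) * \<beta>" if u: "u \<in> Y" for u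
    proof -
      have "outer u p1 \<in> Dsp Y" by (rule outer_in_Dsp[OF Y u]) (use p1 in auto)
      from rel[OF this] have "(p1 \<bullet> x2) * (a2 \<bullet> u) * ?l = (p1 \<bullet> x1) * (a1 \<bullet> u) * \<beta>"
        by (simp add: outer_mv)
      then have "c * (p1 \<bullet> p1) * (a2 \<bullet> u) * ?l = (p1 \<bullet> p1) * (a1 \<bullet> u) * \<beta>"
        using p1x1 p1x2 p2c by (simp add: algebra_simps)
      then show ?thesis using p11 by (simp add: algebra_simps)
    qed
    have e1: "c * (a2 \<bullet> (P0 *v x1)) = \<beta>"
      using relu[OF P0Y[of x1]] np1 lpos unfolding np_def by (simp add: algebra_simps)
    have e2: "c * ?l * ?l = (a1 \<bullet> (P0 *v x2)) * \<beta>"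
      using relu[OF P0Y[of x2]] l2 by (simp add: algebra_simps)
    define y0 where "y0 = x2 - c *\<^sub>R x1"
    have y0Y: "y0 \<in> Y"
    proof -
      have "y0 = (x2 - p2) - c *\<^sub>R (x1 - p1)" unfolding y0_def using p2c by (simp add: algebra_simps)
      then show ?thesis using p1(1) p2(1) Y by (simp add: subspace_diff subspace_scale)
    qed
    have P0y0: "P0 *v y0 = P0 *v x2 - c *\<^sub>R (P0 *v x1)"
      unfolding y0_def by (simp add: matrix_vector_right_distrib matrix_vector_mult_scaleR
          matrix_vector_mult_diff_distrib)
    have y0id: "P0 *v y0 = y0" using P0id[OF y0Y] .
    have ia2: "a2 \<bullet> y0 = ?l - \<beta>"
    proof -
      have "a2 \<bullet> y0 = a2 \<bullet> (P0 *v x2) - c * (a2 \<bullet> (P0 *v x1))"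
        using y0id P0y0 by (metis inner_diff_right inner_scaleR_right)
      then show ?thesis using l2 e1 by simp
    qed
    have ia1: "(a1 \<bullet> y0) * \<beta> = c * ?l * (?l - \<beta>)"
    proof -
      have "a1 \<bullet> y0 = a1 \<bullet> (P0 *v x2) - c * (a1 \<bullet> (P0 *v x1))"
        using y0id P0y0 by (metis inner_diff_right inner_scaleR_right)
      then have "a1 \<bullet> y0 = a1 \<bullet> (P0 *v x2) - c * ?l" using np1 unfolding np_def by simp
      then have "(a1 \<bullet> y0) * \<beta> = (a1 \<bullet> (P0 *v x2)) * \<beta> - c * ?l * \<beta>"
        by (metis left_diff_distrib mult.assoc)
      then show ?thesis using e2 by (simp add: algebra_simps)
    qed
    have Ny0: "N y0 \<le> 1 + \<bar>c\<bar>"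
    proof -
      have "N y0 \<le> N x2 + N (c *\<^sub>R x1)" unfolding y0_def by (rule N_diff_tri[OF nN])
      also have "\<dots> = N x2 + \<bar>c\<bar> * N x1" by (simp add: N_scale[OF nN])
      also have "\<dots> \<le> 1 + \<bar>c\<bar> * 1"
        using np1 np2 unfolding np_def by (intro add_mono mult_left_mono) auto
      finally show ?thesis by simp
    qed
    have b1: "\<bar>a1 \<bullet> y0\<bar> \<le> 1 + \<bar>c\<bar>"
      using N_support_abs[OF nN, of a1 y0] np1 Ny0 unfolding np_def by simp
    have b2: "\<bar>a2 \<bullet> y0\<bar> \<le> 1 + \<bar>c\<bar>"
      using N_support_abs[OF nN, of a2 y0] np2 Ny0 unfolding np_def by simp
    define B where "B = - \<beta>"
    define C where "C = \<bar>c\<bar>"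
    have Bpos: "B > 0" using bneg B_def by simp
    have Cpos: "C > 0" using c0 C_def by simp
    have i: "?l + B \<le> 1 + C" using b2 ia2 unfolding B_def C_def by simp
    have ii: "C * ?l * (?l + B) \<le> (1 + C) * B"
    proof -
      have "\<bar>(a1 \<bullet> y0) * \<beta>\<bar> = C * ?l * (?l + B)"
        using ia1 lpos Bpos unfolding B_def C_def by (simp add: abs_mult)
      moreover have "\<bar>(a1 \<bullet> y0) * \<beta>\<bar> \<le> (1 + C) * B"
      proof -
        have "\<bar>\<beta>\<bar> = - \<beta>" using bneg by simp
        then show ?thesis using b1 bneg unfolding B_def C_def abs_mult
          by (metis abs_ge_zero mult_right_mono)
      qed
      ultimately show ?thesis by simp
    qed
    have "C * (?l + B) < C * ?l * (?l + B)"
    proof -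
      have "C * (?l + B) * 1 < C * (?l + B) * ?l" using Cpos Bpos lpos lam
        by (intro mult_strict_left_mono) auto
      then show ?thesis by (simp add: algebra_simps)
    qed
    with ii have "C * ?l < B" by (simp add: algebra_simps)
    moreover have "C \<le> C * ?l" using Cpos lam by simp
    ultimately show False using i lam by linarith
  qed
  define s where "s m = inverse (real (Suc m))" for m
  have spos: "s m > 0" for m unfolding s_def by simp
  have ex: "\<exists>x a. N x \<le> 1 \<and> (\<forall>y. a \<bullet> y \<le> N y) \<and> a \<bullet> ((P0 - s m *\<^sub>R Dt) *v x) \<ge> ?l" for m
  proof -
    have "- (s m *\<^sub>R Dt) \<in> Dsp Y" using Dt(1) Dsp_subspace[OF Y]
      by (simp add: subspace_neg subspace_scale)
    from proj_add[OF Y P0p this] have Qp: "P0 - s m *\<^sub>R Dt \<in> projections Y" by simp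
    obtain x where x: "N x \<le> 1" "N ((P0 - s m *\<^sub>R Dt) *v x) = op_norm N (P0 - s m *\<^sub>R Dt)"
      using op_attained[OF nN] by blast
    obtain a where a: "\<forall>y. a \<bullet> y \<le> N y" "a \<bullet> ((P0 - s m *\<^sub>R Dt) *v x) = N ((P0 - s m *\<^sub>R Dt) *v x)"
      using N_support[OF nN] by blast
    have "?l \<le> op_norm N (P0 - s m *\<^sub>R Dt)" by (rule rel_le[OF nN Qp])
    then show ?thesis using x a by (intro exI[of _ x] exI[of _ a]) auto
  qed
  then obtain X A where XA: "\<And>m. N (X m) \<le> 1" "\<And>m. \<forall>y. A m \<bullet> y \<le> N y"
    "\<And>m. A m \<bullet> ((P0 - s m *\<^sub>R Dt) *v X m) \<ge> ?l"
    by metis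
  have expand: "A m \<bullet> ((P0 - s m *\<^sub>R Dt) *v X m) = A m \<bullet> (P0 *v X m) - s m * (A m \<bullet> (Dt *v X m))" for m
    by (simp add: matrix_vector_mult_diff_rdistrib scaleR_matrix_vector_assoc[symmetric] inner_diff_right)
  have AP0: "A m \<bullet> (P0 *v X m) \<le> ?l" for m
  proof -
    have "A m \<bullet> (P0 *v X m) \<le> N (P0 *v X m)" using XA(2) by blast
    also have "\<dots> \<le> op_norm N P0 * N (X m)" by (rule op_scaled[OF nN])
    also have "\<dots> \<le> ?l * 1" using P0n XA(1)[of m] lpos by (simp add: mult_left_le)
    finally show ?thesis by simp
  qed
  have negm: "A m \<bullet> (Dt *v X m) \<le> 0" for m
  proof -
    have "s m * (A m \<bullet> (Dt *v X m)) \<le> 0" using XA(3)[of m] expand[of m] AP0[of m] by linarith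
    then show ?thesis using spos[of m] by (simp add: mult_le_0_iff)
  qed
  obtain c0 where c0: "c0 > 0" "\<And>x. c0 * norm x \<le> N x" using N_lower[OF nN] by blast
  obtain C2 where C2: "\<And>a. (\<forall>y. a \<bullet> y \<le> N y) \<Longrightarrow> norm a \<le> C2" using N_support_bounded[OF nN] by blast
  have "range (\<lambda>m. (X m, A m)) \<subseteq> cball 0 (1 / c0) \<times> cball 0 C2"
  proof -
    have "(X m, A m) \<in> cball 0 (1 / c0) \<times> cball 0 C2" for m
    proof -
    have "norm (X m) \<le> 1 / c0" using c0(2)[of "X m"] XA(1)[of m] c0(1) by (simp add: field_simps)
    moreover have "norm (A m) \<le> C2" using C2 XA(2) by blast
    ultimately show "(X m, A m) \<in> cball 0 (1 / c0) \<times> cball 0 C2" by simp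
    qed
    then show ?thesis by auto
  qed
  then have "bounded (range (\<lambda>m. (X m, A m)))"
    by (rule bounded_subset[OF bounded_Times[OF bounded_cball bounded_cball]])
  then obtain lim r where r: "strict_mono (r :: nat \<Rightarrow> nat)" "((\<lambda>m. (X m, A m)) \<circ> r) \<longlonglongrightarrow> lim"
    using bounded_imp_convergent_subsequence by blast
  define x where "x = fst lim"
  define a where "a = snd lim"
  have Xr: "(\<lambda>m. X (r m)) \<longlonglongrightarrow> x" using tendsto_fst[OF r(2)] unfolding x_def by (simp add: o_def)
  have Ar: "(\<lambda>m. A (r m)) \<longlonglongrightarrow> a" using tendsto_snd[OF r(2)] unfolding a_def by (simp add: o_def)
  have sr: "(\<lambda>m. s (r m)) \<longlonglongrightarrow> 0"
    using LIMSEQ_subseq_LIMSEQ[OF LIMSEQ_inverse_real_of_nat r(1)] unfolding s_def by (simp add: o_def)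
  have Nx: "N x \<le> 1"
    by (rule LIMSEQ_le_const2[OF isCont_tendsto_compose[OF N_isCont[OF nN] Xr]]) (use XA(1) in auto)
  have ax: "\<forall>y. a \<bullet> y \<le> N y"
  proof
    fix y
    show "a \<bullet> y \<le> N y"
      by (rule LIMSEQ_le_const2[OF tendsto_inner[OF Ar tendsto_const]]) (use XA(2) in auto)
  qed
  have DX: "(\<lambda>m. Dt *v X (r m)) \<longlonglongrightarrow> Dt *v x"
    by (rule bounded_linear.tendsto[OF matrix_vector_mul_bounded_linear Xr])
  have PX: "(\<lambda>m. P0 *v X (r m)) \<longlonglongrightarrow> P0 *v x"
    by (rule bounded_linear.tendsto[OF matrix_vector_mul_bounded_linear Xr])
  have aD: "a \<bullet> (Dt *v x) \<le> 0"
    by (rule LIMSEQ_le_const2[OF tendsto_inner[OF Ar DX]]) (use negm in auto)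
  have aP: "a \<bullet> (P0 *v x) \<ge> ?l"
  proof -
    have "(\<lambda>m. A (r m) \<bullet> (P0 *v X (r m)) - s (r m) * (A (r m) \<bullet> (Dt *v X (r m))))
          \<longlonglongrightarrow> a \<bullet> (P0 *v x) - 0 * (a \<bullet> (Dt *v x))"
      by (intro tendsto_intros tendsto_inner Ar PX DX sr)
    then have "?l \<le> a \<bullet> (P0 *v x) - 0 * (a \<bullet> (Dt *v x))"
      by (rule LIMSEQ_le_const) (use XA(3) expand in metis)
    then show ?thesis by simp
  qed
  have "a \<bullet> (P0 *v x) \<le> ?l"
  proof -
    have "a \<bullet> (P0 *v x) \<le> N (P0 *v x)" using ax by blast
    also have "\<dots> \<le> op_norm N P0 * N x" by (rule op_scaled[OF nN])
    also have "\<dots> \<le> ?l * 1" using P0n Nx lpos by (simp add: mult_left_le)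
    finally show ?thesis by simp
  qed
  with aP have npx: "np x a" unfolding np_def using Nx ax by simp
  have "a \<bullet> (Dt *v x) < 0" using aD K5'[OF npx] by linarith
  then show False by (rule K6[OF npx])
qed

lemma main_a:
  fixes N :: "real^'n \<Rightarrow> real" and Y :: "(real^'n) set"
  assumes Y: "subspace Y"
  shows "aff_dim (min_projections N Y) \<le> int (dim (Dsp Y))"
proof (cases "min_projections N Y = {}")
  case True then show ?thesis by simp
next
  case False
  then obtain P0 where P0: "P0 \<in> min_projections N Y" by blast
  have "aff_dim (min_projections N Y) = int (dim ((\<lambda>x. x - P0) ` min_projections N Y))"
    by (rule aff_dim_eq_dim_subtract) (rule hull_inc[OF P0])
  also have "\<dots> \<le> int (dim (Dsp Y))"
  proof -
    have "(\<lambda>x. x - P0) ` min_projections N Y \<subseteq> Dsp Y"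
      using proj_diff[OF Y] P0 minp_sub by blast
    then show ?thesis using dim_subset by (simp add: dim_subset)
  qed
  finally show ?thesis .
qed

lemma dim_coord_vec:
  fixes S :: "'n::finite set"
  shows "dim {x :: real^'n. \<forall>i. i \<notin> S \<longrightarrow> x$i = 0} = card S"
proof -
  define d where "d = (\<lambda>i. axis i (1::real)) ` S"
  have dB: "d \<subseteq> Basis" unfolding d_def Basis_vec_def by auto
  have "{x :: real^'n. \<forall>i. i \<notin> S \<longrightarrow> x$i = 0} = {x. \<forall>b\<in>Basis. b \<notin> d \<longrightarrow> x \<bullet> b = 0}"
    unfolding d_def Basis_vec_def by (auto simp: inner_axis axis_eq_axis)
  moreover have "card d = card S" unfolding d_def
    by (rule card_image) (auto simp: inj_on_def axis_eq_axis)
  ultimately show ?thesis using dim_substandard[OF dB] by simp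
qed

lemma dim_coord_mat:
  fixes R :: "('n::finite \<times> 'n) set"
  shows "dim {D :: real^'n^'n. \<forall>i j. (i, j) \<notin> R \<longrightarrow> D$i$j = 0} = card R"
proof -
  define d where "d = (\<lambda>(i, j). axis i (axis j (1::real))) ` R"
  have dB: "d \<subseteq> Basis" unfolding d_def Basis_vec_def by auto
  have mem: "axis y (axis ya (1::real)) \<in> d \<longleftrightarrow> (y, ya) \<in> R" for y ya
    unfolding d_def by (force simp: axis_eq_axis)
  have "{D :: real^'n^'n. \<forall>i j. (i, j) \<notin> R \<longrightarrow> D$i$j = 0} = {x. \<forall>b\<in>Basis. b \<notin> d \<longrightarrow> x \<bullet> b = 0}"
    unfolding Basis_vec_def using mem by (auto simp: inner_axis)
  moreover have "card d = card R" unfolding d_def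
    by (rule card_image) (auto simp: inj_on_def axis_eq_axis)
  ultimately show ?thesis using dim_substandard[OF dB] by simp
qed

lemma aff_lb:
  fixes C :: "(real^'n^'n) set"
  assumes "subspace C" "r > 0" "(\<lambda>D. P + D) ` (C \<inter> ball 0 r) \<subseteq> M"
  shows "int (dim C) \<le> aff_dim M"
proof -
  have "aff_dim ((\<lambda>D. P + D) ` (C \<inter> ball 0 r)) \<le> aff_dim M" by (rule aff_dim_subset[OF assms(3)])
  moreover have "aff_dim ((\<lambda>D. P + D) ` (C \<inter> ball 0 r)) = aff_dim (C \<inter> ball 0 r)"
    using aff_dim_translation_eq[of P "C \<inter> ball 0 r"] by simp
  moreover have "aff_dim (C \<inter> ball 0 r) = aff_dim C"
  proof (rule aff_dim_convex_Int_open)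
    have "0 \<in> C \<inter> ball 0 r" using assms subspace_0[OF assms(1)] by simp
    then show "C \<inter> ball 0 r \<noteq> {}" by blast
  qed (use assms subspace_imp_convex in auto)
  moreover have "aff_dim C = int (dim C)" by (rule aff_dim_subspace[OF assms(1)])
  ultimately show ?thesis by simp
qed

lemma coord_subspace: "subspace {x :: real^'n. \<forall>i. i \<notin> S \<longrightarrow> x$i = 0}"
  unfolding subspace_def by auto

lemma coord_mat_subspace: "subspace {D :: real^'n^'n. \<forall>i j. (i, j) \<notin> R \<longrightarrow> D$i$j = 0}"
  unfolding subspace_def by auto

lemma mv_axis: "(P *v axis j 1) $ i = P $ i $ j" for P :: "real^'n^'m"
  by (simp add: matrix_vector_mult_def axis_def if_distrib cong: if_cong)

lemma mv_nth: "(P *v x) $ i = (\<Sum>j\<in>UNIV. P $ i $ j * x $ j)"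
  by (simp add: matrix_vector_mult_def)

lemma coord_proj:
  fixes P :: "real^'n^'n"
  assumes "\<And>i j. i \<notin> S \<Longrightarrow> P$i$j = 0" "\<And>i j. j \<in> S \<Longrightarrow> P$i$j = (if i = j then 1 else 0)"
  shows "P \<in> projections {x. \<forall>i. i \<notin> S \<longrightarrow> x$i = 0}"
  unfolding projections_def
proof (intro CollectI conjI allI ballI impI)
  fix x i assume "i \<notin> S"
  then show "(P *v x) $ i = 0" using assms(1) by (simp add: mv_nth)
next
  fix y :: "real^'n" assume y: "y \<in> {x. \<forall>i. i \<notin> S \<longrightarrow> x$i = 0}"
  show "P *v y = y"
  proof (subst vec_eq_iff, intro allI)
    fix i
    have "(P *v y) $ i = (\<Sum>j\<in>UNIV. (if i = j then 1 else 0) * y $ j)"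
      unfolding mv_nth
    proof (rule sum.cong[OF refl])
      fix j show "P $ i $ j * y $ j = (if i = j then 1 else 0) * y $ j"
        using assms(2)[of j i] y by (cases "j \<in> S") auto
    qed
    also have "\<dots> = (\<Sum>j\<in>UNIV. if i = j then y $ j else 0)" by (intro sum.cong) auto
    also have "\<dots> = y $ i" by simp
    finally show "(P *v y) $ i = y $ i" .
  qed
qed

definition l1n :: "real^'n \<Rightarrow> real" where "l1n x = (\<Sum>i\<in>UNIV. \<bar>x$i\<bar>)"

lemma l1n_norm: "is_norm (l1n :: real^'n \<Rightarrow> real)"
  unfolding is_norm_def l1n_def
proof (intro conjI allI)
  fix x :: "real^'n"
  show "((\<Sum>i\<in>UNIV. \<bar>x$i\<bar>) = 0) = (x = 0)"
    by (simp add: sum_nonneg_eq_0_iff vec_eq_iff)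
next
  fix c and x :: "real^'n"
  show "(\<Sum>i\<in>UNIV. \<bar>(c *\<^sub>R x)$i\<bar>) = \<bar>c\<bar> * (\<Sum>i\<in>UNIV. \<bar>x$i\<bar>)"
    by (simp add: abs_mult sum_distrib_left)
next
  fix x y :: "real^'n"
  show "(\<Sum>i\<in>UNIV. \<bar>(x + y)$i\<bar>) \<le> (\<Sum>i\<in>UNIV. \<bar>x$i\<bar>) + (\<Sum>i\<in>UNIV. \<bar>y$i\<bar>)"
    by (simp add: sum.distrib[symmetric] sum_mono abs_triangle_ineq)
qed

lemma l1n_col:
  fixes P :: "real^'n^'n"
  assumes "\<And>j. (\<Sum>i\<in>UNIV. \<bar>P$i$j\<bar>) \<le> 1"
  shows "l1n (P *v x) \<le> l1n x"
proof -
  have "l1n (P *v x) = (\<Sum>i\<in>UNIV. \<bar>\<Sum>j\<in>UNIV. P$i$j * x$j\<bar>)" unfolding l1n_def by (simp add: mv_nth)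
  also have "\<dots> \<le> (\<Sum>i\<in>UNIV. \<Sum>j\<in>UNIV. \<bar>P$i$j\<bar> * \<bar>x$j\<bar>)"
    by (intro sum_mono) (metis (no_types, lifting) abs_mult sum.cong sum_abs)
  also have "\<dots> = (\<Sum>j\<in>UNIV. \<bar>x$j\<bar> * (\<Sum>i\<in>UNIV. \<bar>P$i$j\<bar>))"
    by (subst sum.swap) (simp add: sum_distrib_left mult.commute)
  also have "\<dots> \<le> (\<Sum>j\<in>UNIV. \<bar>x$j\<bar> * 1)"
    by (intro sum_mono mult_left_mono assms) auto
  finally show ?thesis unfolding l1n_def by simp
qed

lemma ex_a:
  fixes S :: "'n::finite set"
  assumes cS: "card S = k" and k1: "1 \<le> k"
  shows "\<exists>(N :: real^'n \<Rightarrow> real) Y. is_norm N \<and> subspace Y \<and> dim Y = k \<and>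
        aff_dim (min_projections N Y) = int k * (int CARD('n) - int k)"
proof -
  define Y where "Y = {x :: real^'n. \<forall>i. i \<notin> S \<longrightarrow> x$i = 0}"
  define N where "N = (l1n :: real^'n \<Rightarrow> real)"
  have nN: "is_norm N" unfolding N_def by (rule l1n_norm)
  have sY: "subspace Y" unfolding Y_def by (rule coord_subspace)
  have dY: "dim Y = k" unfolding Y_def using dim_coord_vec[of S] cS by simp
  define Pst :: "real^'n^'n" where "Pst = (\<chi> i j. if i = j \<and> i \<in> S then 1 else 0)"
  define C where "C = {D :: real^'n^'n. \<forall>i j. (i, j) \<notin> S \<times> (- S) \<longrightarrow> D$i$j = 0}"
  define r where "r = 1 / real CARD('n)"
  have rpos: "r > 0" unfolding r_def by simp
  have famP: "Pst + D \<in> projections Y" if "D \<in> C" for D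
    unfolding Y_def by (rule coord_proj) (use that in \<open>auto simp: C_def Pst_def\<close>)
  have famN: "op_norm N (Pst + D) \<le> 1" if "D \<in> C" "D \<in> ball 0 r" for D
  proof (rule op_least[OF nN])
    fix x :: "real^'n" assume "N x \<le> 1"
    have "N ((Pst + D) *v x) \<le> N x" unfolding N_def
    proof (rule l1n_col)
      fix j
      show "(\<Sum>i\<in>UNIV. \<bar>(Pst + D)$i$j\<bar>) \<le> 1"
      proof (cases "j \<in> S")
        case True
        then have "(\<Sum>i\<in>UNIV. \<bar>(Pst + D)$i$j\<bar>) = (\<Sum>i\<in>UNIV. if i = j then 1 else 0)"
          using that(1) by (intro sum.cong) (auto simp: C_def Pst_def)
        then show ?thesis by simp
      next
        case False
        have "(\<Sum>i\<in>UNIV. \<bar>(Pst + D)$i$j\<bar>) = (\<Sum>i\<in>UNIV. \<bar>D$i$j\<bar>)"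
          using False by (intro sum.cong) (auto simp: Pst_def)
        also have "\<dots> \<le> (\<Sum>i\<in>(UNIV::'n set). r)"
        proof (intro sum_mono)
          fix i
          have "\<bar>D$i$j\<bar> \<le> norm (D$i)" using component_le_norm_cart[of "D$i" j] by simp
          also have "\<dots> \<le> norm D" by (rule Finite_Cartesian_Product.norm_nth_le)
          also have "\<dots> < r" using that(2) by simp
          finally show "\<bar>D$i$j\<bar> \<le> r" by simp
        qed
        also have "\<dots> = 1" unfolding r_def by simp
        finally show ?thesis .
      qed
    qed
    then show "N ((Pst + D) *v x) \<le> 1" using \<open>N x \<le> 1\<close> by simp
  qed
  have PstP: "Pst \<in> projections Y" using famP[of 0] by (simp add: C_def)
  have lam1: "1 \<le> rel_proj_const N Y"
  proof (rule rel_ge)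
    show "projections Y \<noteq> {}" using PstP by blast
  next
    fix P assume P: "P \<in> projections Y"
    obtain s where s: "s \<in> S" using cS k1 by (metis card.empty ex_in_conv not_one_le_zero)
    have yY: "axis s 1 \<in> Y" unfolding Y_def using s by (auto simp: axis_def)
    have Ny: "N (axis s 1) = 1"
    proof -
      have "N (axis s 1) = (\<Sum>i\<in>UNIV. if i = s then 1 else 0)"
        unfolding N_def l1n_def by (intro sum.cong) (auto simp: axis_def)
      then show ?thesis by simp
    qed
    have "N (P *v axis s 1) = 1" using P yY Ny unfolding projections_def by auto
    then show "1 \<le> op_norm N P" using op_upper[OF nN, of "axis s 1" P] Ny by simp
  qed
  have fam: "(\<lambda>D. Pst + D) ` (C \<inter> ball 0 r) \<subseteq> min_projections N Y"
  proof clarify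
    fix D assume D: "D \<in> C" "D \<in> ball 0 r"
    have "rel_proj_const N Y \<le> op_norm N (Pst + D)" by (rule rel_le[OF nN famP[OF D(1)]])
    then have "op_norm N (Pst + D) = rel_proj_const N Y" using famN[OF D] lam1 by linarith
    then show "Pst + D \<in> min_projections N Y" unfolding min_projections_def using famP[OF D(1)] by simp
  qed
  have sC: "subspace C" unfolding C_def by (rule coord_mat_subspace)
  have dC: "dim C = k * (CARD('n) - k)"
  proof -
    have "card (- S) = CARD('n) - k" using cS by (simp add: Compl_eq_Diff_UNIV card_Diff_subset)
    then show ?thesis unfolding C_def using dim_coord_mat[of "S \<times> - S"] cS by (simp add: card_cartesian_product)
  qed
  have kn: "k \<le> CARD('n)" using cS card_mono[of UNIV S] by simp
  have lb: "int k * (int CARD('n) - int k) \<le> aff_dim (min_projections N Y)"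
    using aff_lb[OF sC rpos fam] dC kn by (simp add: of_nat_diff)
  have ub: "aff_dim (min_projections N Y) \<le> int k * (int CARD('n) - int k)"
  proof -
    have e: "int (k * (CARD('n) - k)) = int k * (int CARD('n) - int k)" using kn by (simp add: of_nat_diff)
    have "dim (Dsp Y) \<le> k * (CARD('n) - k)" using dim_Dsp_le[OF sY] dY by simp
    then have "int (dim (Dsp Y)) \<le> int (k * (CARD('n) - k))" by (simp only: of_nat_le_iff)
    then show ?thesis using main_a[OF sY, of N] e by linarith
  qed
  show ?thesis using nN sY dY lb ub by (intro exI[of _ N] exI[of _ Y]) auto
qed

definition mxb :: "'n \<Rightarrow> 'n \<Rightarrow> 'n \<Rightarrow> 'n set \<Rightarrow> real^'n \<Rightarrow> real" where
  "mxb ia ib it A x = max (max \<bar>x$ia + x$it\<bar> \<bar>x$ib\<bar>) (max \<bar>x$ia + x$ib\<bar> (\<Sum>j\<in>A. \<bar>x$j\<bar>))"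

definition nb :: "'n \<Rightarrow> 'n \<Rightarrow> 'n \<Rightarrow> 'n set \<Rightarrow> 'n set \<Rightarrow> real^'n \<Rightarrow> real" where
  "nb ia ib it A B x = mxb ia ib it A x + (\<Sum>j\<in>B. \<bar>x$j\<bar>)"

lemma max_scale: "0 \<le> (c::real) \<Longrightarrow> max (c * a) (c * b) = c * max a b"
  using max_mult_distrib_left[of c a b] by simp

lemma max4_sub:
  fixes a b c d a1 b1 c1 d1 a2 b2 c2 d2 :: real
  assumes "a \<le> a1 + a2" "b \<le> b1 + b2" "c \<le> c1 + c2" "d \<le> d1 + d2"
  shows "max (max a b) (max c d) \<le> max (max a1 b1) (max c1 d1) + max (max a2 b2) (max c2 d2)"
proof -
  have "a1 \<le> max (max a1 b1) (max c1 d1)" "b1 \<le> max (max a1 b1) (max c1 d1)"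
    "c1 \<le> max (max a1 b1) (max c1 d1)" "d1 \<le> max (max a1 b1) (max c1 d1)"
    "a2 \<le> max (max a2 b2) (max c2 d2)" "b2 \<le> max (max a2 b2) (max c2 d2)"
    "c2 \<le> max (max a2 b2) (max c2 d2)" "d2 \<le> max (max a2 b2) (max c2 d2)"
    by auto
  then show ?thesis using assms by (intro max.boundedI) linarith+
qed

context
  fixes ia ib it :: "'n::finite" and A B :: "'n set"
  assumes dab: "ia \<noteq> ib" and dat: "ia \<noteq> it" and dbt: "ib \<noteq> it"
    and aA: "ia \<notin> A" and bA: "ib \<notin> A" and tA: "it \<notin> A"
    and aB: "ia \<notin> B" and bB: "ib \<notin> B" and tB: "it \<notin> B"
    and AB: "A \<inter> B = {}" and cover: "\<And>i. i \<in> {ia, ib, it} \<union> A \<union> B"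
begin

lemma mxb_nonneg: "0 \<le> mxb ia ib it A x"
  unfolding mxb_def by (simp add: le_max_iff_disj)

lemma mxb_ge: "\<bar>x$ia + x$it\<bar> \<le> mxb ia ib it A x" "\<bar>x$ib\<bar> \<le> mxb ia ib it A x"
  "\<bar>x$ia + x$ib\<bar> \<le> mxb ia ib it A x" "(\<Sum>j\<in>A. \<bar>x$j\<bar>) \<le> mxb ia ib it A x"
  unfolding mxb_def by (simp_all add: le_max_iff_disj)

lemma nb_ge: "mxb ia ib it A x \<le> nb ia ib it A B x"
  unfolding nb_def by (simp add: sum_nonneg)

lemma nb_norm: "is_norm (nb ia ib it A B)"
  unfolding is_norm_def
proof (intro conjI allI)
  fix x :: "real^'n"
  show "(nb ia ib it A B x = 0) = (x = 0)"
  proof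
    assume z: "nb ia ib it A B x = 0"
    have sB: "0 \<le> (\<Sum>j\<in>B. \<bar>x$j\<bar>)" by (simp add: sum_nonneg)
    have m0: "mxb ia ib it A x = 0" and b0: "(\<Sum>j\<in>B. \<bar>x$j\<bar>) = 0"
      using z mxb_nonneg[of x] sB unfolding nb_def by linarith+
    have 1: "x$ia + x$it = 0" "x$ib = 0" "x$ia + x$ib = 0" "(\<Sum>j\<in>A. \<bar>x$j\<bar>) = 0"
    proof -
      have "0 \<le> (\<Sum>j\<in>A. \<bar>x$j\<bar>)" by (simp add: sum_nonneg)
      then show "(\<Sum>j\<in>A. \<bar>x$j\<bar>) = 0" using mxb_ge(4)[of x] m0 by linarith
      show "x$ia + x$it = 0" "x$ib = 0" "x$ia + x$ib = 0"
        using mxb_ge[of x] m0 by auto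
    qed
    have A0: "\<forall>j\<in>A. x$j = 0" using 1(4) by (simp add: sum_nonneg_eq_0_iff)
    have B0: "\<forall>j\<in>B. x$j = 0" using b0 by (simp add: sum_nonneg_eq_0_iff)
    show "x = 0"
    proof (subst vec_eq_iff, intro allI)
      fix i show "x$i = 0$i" using cover[of i] 1 A0 B0 by auto
    qed
  next
    assume "x = 0" then show "nb ia ib it A B x = 0" unfolding nb_def mxb_def by simp
  qed
next
  fix c and x :: "real^'n"
  have "mxb ia ib it A (c *\<^sub>R x) = \<bar>c\<bar> * mxb ia ib it A x"
    unfolding mxb_def by (simp add: abs_mult max_scale flip: sum_distrib_left distrib_left)
  then show "nb ia ib it A B (c *\<^sub>R x) = \<bar>c\<bar> * nb ia ib it A B x"
    unfolding nb_def by (simp add: abs_mult sum_distrib_left distrib_left)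
next
  fix x y :: "real^'n"
  have m: "mxb ia ib it A (x + y) \<le> mxb ia ib it A x + mxb ia ib it A y"
  proof -
    have s: "(\<Sum>j\<in>A. \<bar>(x + y)$j\<bar>) \<le> (\<Sum>j\<in>A. \<bar>x$j\<bar>) + (\<Sum>j\<in>A. \<bar>y$j\<bar>)"
      by (simp add: sum.distrib[symmetric] sum_mono abs_triangle_ineq)
    have "\<bar>(x + y)$ia + (x + y)$it\<bar> \<le> \<bar>x$ia + x$it\<bar> + \<bar>y$ia + y$it\<bar>" by simp
    moreover have "\<bar>(x + y)$ib\<bar> \<le> \<bar>x$ib\<bar> + \<bar>y$ib\<bar>" by simp
    moreover have "\<bar>(x + y)$ia + (x + y)$ib\<bar> \<le> \<bar>x$ia + x$ib\<bar> + \<bar>y$ia + y$ib\<bar>" by simp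
    ultimately show ?thesis using s unfolding mxb_def by (intro max4_sub) auto
  qed
  have s: "(\<Sum>j\<in>B. \<bar>(x + y)$j\<bar>) \<le> (\<Sum>j\<in>B. \<bar>x$j\<bar>) + (\<Sum>j\<in>B. \<bar>y$j\<bar>)"
    by (simp add: sum.distrib[symmetric] sum_mono abs_triangle_ineq)
  show "nb ia ib it A B (x + y) \<le> nb ia ib it A B x + nb ia ib it A B y"
    unfolding nb_def using m s by simp
qed


definition "Sb = {ia, ib} \<union> A"
definition "Yb = {x :: real^'n. \<forall>i. i \<notin> Sb \<longrightarrow> x$i = 0}"
definition "Rb = Sb \<times> B \<union> A \<times> {it}"
definition "Cb = {D :: real^'n^'n. \<forall>i j. (i, j) \<notin> Rb \<longrightarrow> D$i$j = 0}"
definition "Pb = (\<chi> i j. if i = j \<and> i \<in> Sb then 1 else 0) + (2/3) *\<^sub>R outer (axis ia 1) (axis it 1)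
   - (1/3) *\<^sub>R outer (axis ib 1) (axis it 1)"

lemma Pb_mv: "Pb *v x = (\<chi> i. if i \<in> Sb then x$i else 0) + ((2/3) * x$it) *\<^sub>R axis ia 1
    - ((1/3) * x$it) *\<^sub>R axis ib 1"
proof -
  have "(\<chi> i j. if i = j \<and> i \<in> Sb then 1 else 0) *v x = (\<chi> i. if i \<in> Sb then x$i else (0::real))"
  proof (subst vec_eq_iff, intro allI)
    fix i
    have "((\<chi> i j. if i = j \<and> i \<in> Sb then 1 else 0) *v x) $ i
          = (\<Sum>j\<in>UNIV. if j = i then (if i \<in> Sb then x$i else 0) else 0)"
      unfolding mv_nth by (intro sum.cong) auto
    then show "((\<chi> i j. if i = j \<and> i \<in> Sb then 1 else 0) *v x) $ i = (\<chi> i. if i \<in> Sb then x$i else (0::real)) $ i"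
      by simp
  qed
  then show ?thesis unfolding Pb_def
    by (simp add: matrix_vector_mult_add_rdistrib matrix_vector_mult_diff_rdistrib
        scaleR_matrix_vector_assoc[symmetric] outer_mv inner_axis')
qed

lemma Pb_nth: "(Pb *v x)$ia = x$ia + (2/3) * x$it" "(Pb *v x)$ib = x$ib - (1/3) * x$it"
  "(Pb *v x)$it = 0" "j \<in> A \<Longrightarrow> (Pb *v x)$j = x$j" "j \<in> B \<Longrightarrow> (Pb *v x)$j = 0"
  unfolding Pb_mv using dab dat dbt aA bA tA aB bB tB AB
  by (auto simp: Sb_def axis_def)

lemma Cb_mv:
  assumes D: "D \<in> Cb"
  shows "(D *v x)$i = (if i \<in> Sb then (\<Sum>j\<in>B. D$i$j * x$j) else 0) + (if i \<in> A then D$i$it * x$it else 0)"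
proof -
  have "(D *v x)$i = (\<Sum>j\<in>B. D$i$j * x$j) + (\<Sum>j\<in>-B. D$i$j * x$j)"
  proof -
    have "(UNIV :: 'n set) = B \<union> -B" by auto
    then have "(\<Sum>j\<in>UNIV. D$i$j * x$j) = (\<Sum>j\<in>B \<union> -B. D$i$j * x$j)" by simp
    also have "\<dots> = (\<Sum>j\<in>B. D$i$j * x$j) + (\<Sum>j\<in>-B. D$i$j * x$j)"
      by (rule sum.union_disjoint) auto
    finally show ?thesis unfolding mv_nth .
  qed
  moreover have "(\<Sum>j\<in>B. D$i$j * x$j) = (if i \<in> Sb then (\<Sum>j\<in>B. D$i$j * x$j) else 0)"
    using D by (auto simp: Cb_def Rb_def Sb_def)
  moreover have "(\<Sum>j\<in>-B. D$i$j * x$j) = (\<Sum>j\<in>-B. if j = it then (if i \<in> A then D$i$it * x$it else 0) else 0)"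
    using D AB by (intro sum.cong) (auto simp: Cb_def Rb_def Sb_def)
  moreover have "\<dots> = (if i \<in> A then D$i$it * x$it else 0)" using tB by simp
  ultimately show ?thesis by simp
qed

lemma Cb_sub: "subspace Cb" unfolding Cb_def by (rule coord_mat_subspace)

lemma Pb_entry: "Pb$i$j = (if i = j \<and> i \<in> Sb then 1 else 0) + (if i = ia \<and> j = it then 2/3 else 0)
   - (if i = ib \<and> j = it then 1/3 else 0)"
  by (simp add: Pb_def outer_def axis_def)

lemma Sb_facts: "ia \<in> Sb" "ib \<in> Sb" "it \<notin> Sb" "j \<in> B \<Longrightarrow> j \<notin> Sb" "A \<subseteq> Sb"
  using tA tB bB aB AB dat dbt unfolding Sb_def by auto

lemma Pb_proj: "D \<in> Cb \<Longrightarrow> Pb + D \<in> projections Yb"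
  unfolding Yb_def
proof (rule coord_proj)
  fix i j assume D: "D \<in> Cb"
  show "i \<notin> Sb \<Longrightarrow> (Pb + D)$i$j = 0"
  proof -
    assume i: "i \<notin> Sb"
    then have "i \<noteq> ia" "i \<noteq> ib" "i \<notin> A" using Sb_facts by auto
    moreover have "(i, j) \<notin> Rb" using i Sb_facts unfolding Rb_def by auto
    ultimately show ?thesis using D i unfolding Cb_def by (simp add: Pb_entry)
  qed
  show "j \<in> Sb \<Longrightarrow> (Pb + D)$i$j = (if i = j then 1 else 0)"
  proof -
    assume j: "j \<in> Sb"
    then have "j \<noteq> it" using Sb_facts by auto
    moreover have "(i, j) \<notin> Rb" using j Sb_facts unfolding Rb_def by auto
    ultimately show ?thesis using D j unfolding Cb_def by (simp add: Pb_entry)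
  qed
qed

lemma Pb_bound:
  assumes D: "D \<in> Cb" and dl: "\<And>i j. \<bar>D$i$j\<bar> \<le> \<delta>" and d0: "0 \<le> \<delta>"
    and dA: "9 * \<delta> * real (card A) \<le> 1" and d9: "9 * \<delta> \<le> 1"
  shows "nb ia ib it A B ((Pb + D) *v x) \<le> 4/3 * nb ia ib it A B x"
proof -
  define y where "y = (Pb + D) *v x"
  have yc: "y$i = (Pb *v x)$i + (D *v x)$i" for i unfolding y_def by (simp add: matrix_vector_mult_add_rdistrib)
  define E where "E i = (\<Sum>j\<in>B. D$i$j * x$j)" for i
  define \<beta> where "\<beta> = (\<Sum>j\<in>B. \<bar>x$j\<bar>)"
  define m where "m = mxb ia ib it A x"
  have dA': "real (card A) * \<delta> \<le> 1/9"
  proof -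
    have "real (card A) * \<delta> = (9 * \<delta> * real (card A)) / 9" by simp
    then show ?thesis using dA by linarith
  qed
  have b0: "0 \<le> \<beta>" unfolding \<beta>_def by (simp add: sum_nonneg)
  have nbx: "nb ia ib it A B x = m + \<beta>" unfolding nb_def m_def \<beta>_def by simp
  have Eb: "\<bar>E i\<bar> \<le> \<delta> * \<beta>" for i
  proof -
    have "\<bar>E i\<bar> \<le> (\<Sum>j\<in>B. \<bar>D$i$j * x$j\<bar>)" unfolding E_def by (rule sum_abs)
    also have "\<dots> \<le> (\<Sum>j\<in>B. \<delta> * \<bar>x$j\<bar>)"
      by (intro sum_mono) (simp add: abs_mult dl mult_right_mono)
    also have "\<dots> = \<delta> * \<beta>" unfolding \<beta>_def by (simp add: sum_distrib_left)
    finally show ?thesis .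
  qed
  have db: "\<delta> * \<beta> \<le> \<beta> / 9"
  proof -
    have "(9 * \<delta>) * \<beta> \<le> 1 * \<beta>" using d9 b0 by (intro mult_right_mono) auto
    then show ?thesis by simp
  qed
  have ya: "y$ia = x$ia + 2/3 * x$it + E ia"
    using yc[of ia] Pb_nth(1) Cb_mv[OF D, of x ia] Sb_facts aA unfolding E_def by simp
  have yb: "y$ib = x$ib - 1/3 * x$it + E ib"
    using yc[of ib] Pb_nth(2) Cb_mv[OF D, of x ib] Sb_facts bA unfolding E_def by simp
  have yt: "y$it = 0"
    using yc[of it] Pb_nth(3) Cb_mv[OF D, of x it] Sb_facts tA by simp
  have yB: "y$j = 0" if "j \<in> B" for j
    using yc[of j] Pb_nth(5)[OF that] Cb_mv[OF D, of x j] Sb_facts(4)[OF that] that AB by auto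
  have yA: "y$j = x$j + E j + D$j$it * x$it" if "j \<in> A" for j
    using yc[of j] Pb_nth(4)[OF that] Cb_mv[OF D, of x j] Sb_facts(5) that unfolding E_def by auto
  have m1: "\<bar>x$ia + x$it\<bar> \<le> m" "\<bar>x$ib\<bar> \<le> m" "\<bar>x$ia + x$ib\<bar> \<le> m" "(\<Sum>j\<in>A. \<bar>x$j\<bar>) \<le> m"
    unfolding m_def by (rule mxb_ge)+
  have xt: "\<bar>x$it\<bar> \<le> 3 * m" using m1 by linarith
  have sA: "(\<Sum>j\<in>A. \<bar>y$j\<bar>) \<le> m + \<beta> / 9 + m / 3"
  proof -
    have "(\<Sum>j\<in>A. \<bar>y$j\<bar>) \<le> (\<Sum>j\<in>A. \<bar>x$j\<bar> + \<delta> * \<beta> + \<delta> * \<bar>x$it\<bar>)"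
    proof (intro sum_mono)
      fix j assume j: "j \<in> A"
      have "\<bar>D$j$it * x$it\<bar> \<le> \<delta> * \<bar>x$it\<bar>" by (simp add: abs_mult dl mult_right_mono)
      then show "\<bar>y$j\<bar> \<le> \<bar>x$j\<bar> + \<delta> * \<beta> + \<delta> * \<bar>x$it\<bar>" using yA[OF j] Eb[of j] by linarith
    qed
    also have "\<dots> = (\<Sum>j\<in>A. \<bar>x$j\<bar>) + real (card A) * \<delta> * \<beta> + real (card A) * \<delta> * \<bar>x$it\<bar>"
      by (simp add: sum.distrib)
    also have "\<dots> \<le> m + \<beta> / 9 + m / 3"
    proof -
      have "real (card A) * \<delta> * \<beta> \<le> (1/9) * \<beta>" using dA' b0 by (intro mult_right_mono) auto
      moreover have "real (card A) * \<delta> * \<bar>x$it\<bar> \<le> (1/9) * (3 * m)"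
      proof -
        have "real (card A) * \<delta> * \<bar>x$it\<bar> \<le> (1/9) * \<bar>x$it\<bar>" using dA' by (intro mult_right_mono) auto
        also have "\<dots> \<le> (1/9) * (3 * m)" using xt by simp
        finally show ?thesis .
      qed
      ultimately show ?thesis using m1(4) by simp
    qed
    finally show ?thesis .
  qed
  have nby: "nb ia ib it A B y = mxb ia ib it A y"
  proof -
    have "(\<Sum>j\<in>B. \<bar>y$j\<bar>) = 0" using yB by simp
    then show ?thesis unfolding nb_def by simp
  qed
  have c1: "\<bar>y$ia + y$it\<bar> \<le> 4/3 * (m + \<beta>)"
    using ya yt m1 Eb[of ia] db b0 unfolding abs_le_iff by (simp only: abs_le_iff) (elim conjE; intro conjI; simp add: field_simps; linarith?)
  have c2: "\<bar>y$ib\<bar> \<le> 4/3 * (m + \<beta>)"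
    using yb m1 Eb[of ib] db b0 unfolding abs_le_iff by (simp only: abs_le_iff) (elim conjE; intro conjI; simp add: field_simps; linarith?)
  have c3: "\<bar>y$ia + y$ib\<bar> \<le> 4/3 * (m + \<beta>)"
    using ya yb m1 Eb[of ia] Eb[of ib] db b0 unfolding abs_le_iff by (simp only: abs_le_iff) (elim conjE; intro conjI; simp add: field_simps; linarith?)
  have "m + \<beta> / 9 + m / 3 \<le> 4/3 * (m + \<beta>)" using b0 by (simp add: field_simps)
  with sA have c4: "(\<Sum>j\<in>A. \<bar>y$j\<bar>) \<le> 4/3 * (m + \<beta>)" by (rule order_trans)
  have "mxb ia ib it A y \<le> 4/3 * (m + \<beta>)" unfolding mxb_def max.bounded_iff using c1 c2 c3 c4 by blast
  then show ?thesis using nby nbx unfolding y_def by simp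
qed

lemma nb_small:
  "nb ia ib it A B (a *\<^sub>R axis ia 1 + b *\<^sub>R axis ib 1 + t *\<^sub>R axis it 1) = max (max \<bar>a + t\<bar> \<bar>b\<bar>) \<bar>a + b\<bar>"
proof -
  let ?v = "a *\<^sub>R axis ia 1 + b *\<^sub>R axis ib 1 + t *\<^sub>R axis it (1::real)"
  have c: "?v$ia = a" "?v$ib = b" "?v$it = t" using dab dat dbt by (auto simp: axis_def)
  have z: "?v$j = 0" if "j \<in> A \<union> B" for j
    using that aA bA tA aB bB tB by (auto simp: axis_def)
  have sA: "(\<Sum>j\<in>A. \<bar>?v$j\<bar>) = 0" using z by simp
  have sB: "(\<Sum>j\<in>B. \<bar>?v$j\<bar>) = 0" using z by simp
  show ?thesis unfolding nb_def mxb_def c sA sB by (simp add: max.assoc)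
qed

lemma Pb_lower:
  assumes P: "P \<in> projections Yb"
  shows "4/3 \<le> op_norm (nb ia ib it A B) P"
proof -
  let ?N = "nb ia ib it A B"
  have nN: "is_norm ?N" by (rule nb_norm)
  have eaY: "axis ia 1 \<in> Yb" and ebY: "axis ib 1 \<in> Yb"
    unfolding Yb_def using Sb_facts by (auto simp: axis_def)
  have Pa: "P *v axis ia 1 = axis ia 1" and Pb': "P *v axis ib 1 = axis ib 1"
    using P eaY ebY unfolding projections_def by auto
  define q where "q = P *v axis it 1"
  have qt: "q$it = 0" using P Sb_facts unfolding q_def projections_def Yb_def by auto
  have img: "P *v (a *\<^sub>R axis ia 1 + b *\<^sub>R axis ib 1 + t *\<^sub>R axis it 1)
      = a *\<^sub>R axis ia 1 + b *\<^sub>R axis ib 1 + t *\<^sub>R q" for a b t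
    by (simp add: matrix_vector_right_distrib matrix_vector_mult_scaleR Pa Pb' q_def)
  have comp: "(a *\<^sub>R axis ia 1 + b *\<^sub>R axis ib 1 + t *\<^sub>R q)$ia = a + t * q$ia"
    "(a *\<^sub>R axis ia 1 + b *\<^sub>R axis ib 1 + t *\<^sub>R q)$ib = b + t * q$ib"
    "(a *\<^sub>R axis ia 1 + b *\<^sub>R axis ib 1 + t *\<^sub>R q)$it = 0" for a b t
    using dab dat dbt qt by (auto simp: axis_def)
  have bound: "N1 \<le> op_norm ?N P"
    if "max (max \<bar>a + t\<bar> \<bar>b\<bar>) \<bar>a + b\<bar> \<le> 1"
       "N1 \<le> ?N (a *\<^sub>R axis ia 1 + b *\<^sub>R axis ib 1 + t *\<^sub>R q)" for a b t N1
  proof -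
    have "?N (P *v (a *\<^sub>R axis ia 1 + b *\<^sub>R axis ib 1 + t *\<^sub>R axis it 1)) \<le> op_norm ?N P"
      by (rule op_upper[OF nN]) (use that(1) nb_small in simp)
    then show ?thesis using that(2) img by simp
  qed
  have h1: "2 - q$ia \<le> op_norm ?N P"
  proof (rule bound[where a=2 and b="-1" and t="-1"])
    show "max (max \<bar>2 + - 1\<bar> \<bar>- 1\<bar>) \<bar>2 + - 1\<bar> \<le> (1::real)" by simp
    have "\<bar>(2 *\<^sub>R axis ia 1 + (-1) *\<^sub>R axis ib 1 + (-1) *\<^sub>R q)$ia
       + (2 *\<^sub>R axis ia 1 + (-1) *\<^sub>R axis ib 1 + (-1) *\<^sub>R q)$it\<bar>
       \<le> ?N (2 *\<^sub>R axis ia 1 + (-1) *\<^sub>R axis ib 1 + (-1) *\<^sub>R q)"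
      using mxb_ge(1) nb_ge by (rule order_trans)
    then show "2 - q$ia \<le> ?N (2 *\<^sub>R axis ia 1 + (-1) *\<^sub>R axis ib 1 + (-1) *\<^sub>R q)"
      using comp[of 2 "-1" "-1"] by simp
  qed
  have h2: "1 - q$ib \<le> op_norm ?N P"
  proof (rule bound[where a=0 and b=1 and t="-1"])
    show "max (max \<bar>0 + - 1\<bar> \<bar>1\<bar>) \<bar>0 + 1\<bar> \<le> (1::real)" by simp
    have "\<bar>(0 *\<^sub>R axis ia 1 + 1 *\<^sub>R axis ib 1 + (-1) *\<^sub>R q)$ib\<bar>
       \<le> ?N (0 *\<^sub>R axis ia 1 + 1 *\<^sub>R axis ib 1 + (-1) *\<^sub>R q)"
      using mxb_ge(2) nb_ge by (rule order_trans)
    then show "1 - q$ib \<le> ?N (0 *\<^sub>R axis ia 1 + 1 *\<^sub>R axis ib 1 + (-1) *\<^sub>R q)"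
      using comp[of 0 1 "-1"] by simp
  qed
  have h3: "1 + q$ia + q$ib \<le> op_norm ?N P"
  proof (rule bound[where a=0 and b="-1" and t="-1"])
    show "max (max \<bar>0 + - 1\<bar> \<bar>-1\<bar>) \<bar>0 + -1\<bar> \<le> (1::real)" by simp
    have "\<bar>(0 *\<^sub>R axis ia 1 + (-1) *\<^sub>R axis ib 1 + (-1) *\<^sub>R q)$ia
       + (0 *\<^sub>R axis ia 1 + (-1) *\<^sub>R axis ib 1 + (-1) *\<^sub>R q)$ib\<bar>
       \<le> ?N (0 *\<^sub>R axis ia 1 + (-1) *\<^sub>R axis ib 1 + (-1) *\<^sub>R q)"
      using mxb_ge(3) nb_ge by (rule order_trans)
    then show "1 + q$ia + q$ib \<le> ?N (0 *\<^sub>R axis ia 1 + (-1) *\<^sub>R axis ib 1 + (-1) *\<^sub>R q)"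
      using comp[of 0 "-1" "-1"] by simp
  qed
  from h1 h2 h3 show ?thesis by linarith
qed

lemma ex_b_ctx:
  assumes k2: "2 \<le> k" and cA: "card A = k - 2"
  shows "\<exists>(N :: real^'n \<Rightarrow> real) Y. is_norm N \<and> subspace Y \<and> dim Y = k \<and>
        rel_proj_const N Y > 1 \<and>
        aff_dim (min_projections N Y) = int k * (int CARD('n) - int k) - 2"
proof -
  let ?N = "nb ia ib it A B"
  have nN: "is_norm ?N" by (rule nb_norm)
  have cS: "card Sb = k"
  proof -
    have "card Sb = card (insert ia (insert ib A))" unfolding Sb_def by simp
    also have "\<dots> = card A + 2" using aA bA dab by simp
    finally show ?thesis using cA k2 by simp
  qed
  have sY: "subspace Yb" unfolding Yb_def by (rule coord_subspace)
  have dY: "dim Yb = k" unfolding Yb_def using dim_coord_vec[of Sb] cS by simp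
  have cU: "CARD('n) = k + 1 + card B"
  proof -
    have U: "(UNIV :: 'n set) = insert ia (insert ib (insert it (A \<union> B)))" using cover by blast
    have "card (insert ia (insert ib (insert it (A \<union> B)))) = card (A \<union> B) + 3"
      using dab dat dbt aA bA tA aB bB tB by simp
    also have "card (A \<union> B) = card A + card B" using AB by (simp add: card_Un_disjoint)
    finally show ?thesis using U cA k2 by simp
  qed
  have cR: "card Rb = k * card B + (k - 2)"
  proof -
    have "card Rb = card (Sb \<times> B) + card (A \<times> {it})"
      unfolding Rb_def by (rule card_Un_disjoint) (use tB in auto)
    then show ?thesis using cS cA by (simp add: card_cartesian_product)
  qed
  have n1: "real CARD('n) \<ge> 1" by simp
  define r where "r = 1 / (9 * real CARD('n))"
  have rpos: "r > 0" unfolding r_def by simp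
  have cAn: "card A \<le> CARD('n)" by (rule card_mono) auto
  have famN: "op_norm ?N (Pb + D) \<le> 4/3" if D: "D \<in> Cb" and dl: "\<And>i j. \<bar>D$i$j\<bar> \<le> \<delta>"
    and d0: "0 \<le> \<delta>" and dA: "9 * \<delta> * real (card A) \<le> 1" and d9: "9 * \<delta> \<le> 1" for D \<delta>
  proof (rule op_least[OF nN])
    fix x :: "real^'n" assume x: "?N x \<le> 1"
    have "?N ((Pb + D) *v x) \<le> 4/3 * ?N x" by (rule Pb_bound[OF D dl d0 dA d9])
    then show "?N ((Pb + D) *v x) \<le> 4/3" using x by simp
  qed
  have zC: "0 \<in> Cb" unfolding Cb_def by simp
  have PbP: "Pb \<in> projections Yb" using Pb_proj[OF zC] by simp
  have lam_ge: "4/3 \<le> rel_proj_const ?N Yb"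
    by (rule rel_ge) (use PbP Pb_lower in auto)
  have lam_le: "rel_proj_const ?N Yb \<le> 4/3"
  proof -
    have "rel_proj_const ?N Yb \<le> op_norm ?N Pb" by (rule rel_le[OF nN PbP])
    also have "\<dots> \<le> 4/3" using famN[OF zC, of 0] by simp
    finally show ?thesis .
  qed
  have lam: "rel_proj_const ?N Yb = 4/3" using lam_ge lam_le by simp
  have fam: "(\<lambda>D. Pb + D) ` (Cb \<inter> ball 0 r) \<subseteq> min_projections ?N Yb"
  proof clarify
    fix D assume D: "D \<in> Cb" "D \<in> ball 0 r"
    have dl: "\<bar>D$i$j\<bar> \<le> r" for i j
    proof -
      have "\<bar>D$i$j\<bar> \<le> norm (D$i)" using component_le_norm_cart[of "D$i" j] by simp
      also have "\<dots> \<le> norm D" by (rule Finite_Cartesian_Product.norm_nth_le)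
      also have "\<dots> < r" using D(2) by simp
      finally show ?thesis by simp
    qed
    have dA: "9 * r * real (card A) \<le> 1" unfolding r_def using cAn by (simp add: field_simps)
    have d9: "9 * r \<le> 1" unfolding r_def using n1 by (simp add: field_simps)
    have "op_norm ?N (Pb + D) \<le> 4/3" by (rule famN[OF D(1) dl _ dA d9]) (use rpos in simp)
    moreover have "rel_proj_const ?N Yb \<le> op_norm ?N (Pb + D)" by (rule rel_le[OF nN Pb_proj[OF D(1)]])
    ultimately have "op_norm ?N (Pb + D) = rel_proj_const ?N Yb" using lam by simp
    then show "Pb + D \<in> min_projections ?N Yb" unfolding min_projections_def using Pb_proj[OF D(1)] by simp
  qed
  have dC: "dim Cb = card Rb" unfolding Cb_def by (rule dim_coord_mat)
  have lb: "int (card Rb) \<le> aff_dim (min_projections ?N Yb)"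
    using aff_lb[OF Cb_sub rpos fam] dC by simp
  define m where "m = k * (CARD('n) - k)"
  have mge: "m \<ge> 2" unfolding m_def using cU k2
    by (metis add_diff_cancel_left' add.assoc le_add1 mult_le_mono one_le_numeral nat_mult_1_right
        le_add_diff_inverse2 mult.commute dual_order.trans Suc_eq_plus1 Suc_le_mono nat_mult_le_cancel_disj)
  have dD: "dim (Dsp Yb) \<le> m" unfolding m_def using dim_Dsp_le[OF sY] dY by simp
  have ub: "aff_dim (min_projections ?N Yb) \<le> int m - 2"
    by (rule main_b[OF nN sY _ dD]) (use lam mge in auto)
  have cRm: "card Rb = m - 2" unfolding m_def using cR cU k2
    by (simp add: algebra_simps diff_mult_distrib2)
  have eqm: "int m - 2 = int k * (int CARD('n) - int k) - 2" unfolding m_def using cU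
    by (simp add: of_nat_diff algebra_simps)
  have "aff_dim (min_projections ?N Yb) = int m - 2"
    using lb ub cRm mge by (simp add: of_nat_diff)
  then show ?thesis using nN sY dY lam eqm
    by (intro exI[of _ ?N] exI[of _ Yb]) simp
qed
end

theorem mainTheorem1:
  fixes k :: nat
  assumes "1 \<le> k" and "k \<le> CARD('n::finite) - 1"
  shows
   "(\<forall>(N :: real^'n \<Rightarrow> real) Y. is_norm N \<and> subspace Y \<and> dim Y = k \<longrightarrow>
        aff_dim (min_projections N Y) \<le> int k * (int CARD('n) - int k))
  \<and> (\<exists>(N :: real^'n \<Rightarrow> real) Y. is_norm N \<and> subspace Y \<and> dim Y = k \<and>
        aff_dim (min_projections N Y) = int k * (int CARD('n) - int k))
  \<and> (\<forall>(N :: real^'n \<Rightarrow> real) Y. is_norm N \<and> subspace Y \<and> dim Y = k \<and> rel_proj_const N Y > 1 \<longrightarrow>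
        aff_dim (min_projections N Y) \<le> int k * (int CARD('n) - int k) - 2)
  \<and> (2 \<le> k \<longrightarrow> (\<exists>(N :: real^'n \<Rightarrow> real) Y. is_norm N \<and> subspace Y \<and> dim Y = k \<and>
        rel_proj_const N Y > 1 \<and>
        aff_dim (min_projections N Y) = int k * (int CARD('n) - int k) - 2))"
proof -
  have k1: "1 \<le> k" and kn: "k \<le> CARD('n) - 1" using assms by auto
  have kn': "k < CARD('n)" using kn k1 by linarith
  have conv: "int (k * (CARD('n) - k)) = int k * (int CARD('n) - int k)"
    using kn' by (simp add: of_nat_diff)
  have mpos: "1 \<le> k * (CARD('n) - k)" using k1 kn' by simp
  have P1: "aff_dim (min_projections N Y) \<le> int k * (int CARD('n) - int k)"
    if "is_norm N" "subspace Y" "dim Y = k" for N :: "real^'n \<Rightarrow> real" and Y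
  proof -
    have "dim (Dsp Y) \<le> k * (CARD('n) - k)" using dim_Dsp_le[OF that(2)] that(3) by simp
    then have "int (dim (Dsp Y)) \<le> int (k * (CARD('n) - k))" by (simp only: of_nat_le_iff)
    then show ?thesis using main_a[OF that(2), of N] conv by linarith
  qed
  have P2: "\<exists>(N :: real^'n \<Rightarrow> real) Y. is_norm N \<and> subspace Y \<and> dim Y = k \<and>
        aff_dim (min_projections N Y) = int k * (int CARD('n) - int k)"
  proof -
    obtain S :: "'n set" where "card S = k"
      using obtain_subset_with_card_n[of k "UNIV :: 'n set"] kn' by auto
    then show ?thesis using ex_a k1 by blast
  qed
  have P3: "aff_dim (min_projections N Y) \<le> int k * (int CARD('n) - int k) - 2"
    if "is_norm N" "subspace Y" "dim Y = k" "rel_proj_const N Y > 1" for N :: "real^'n \<Rightarrow> real" and Y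
  proof -
    have "dim (Dsp Y) \<le> k * (CARD('n) - k)" using dim_Dsp_le[OF that(2)] that(3) by simp
    from main_b[OF that(1,2,4) this mpos] show ?thesis using conv by linarith
  qed
  have P4: "\<exists>(N :: real^'n \<Rightarrow> real) Y. is_norm N \<and> subspace Y \<and> dim Y = k \<and>
        rel_proj_const N Y > 1 \<and>
        aff_dim (min_projections N Y) = int k * (int CARD('n) - int k) - 2" if k2: "2 \<le> k"
  proof -
    obtain f :: "nat \<Rightarrow> 'n" where f: "bij_betw f {0..<CARD('n)} UNIV"
      using ex_bij_betw_nat_finite[of "UNIV :: 'n set"] by auto
    have inj: "inj_on f {0..<CARD('n)}" using f by (simp add: bij_betw_def)
    have surj: "f ` {0..<CARD('n)} = UNIV" using f by (simp add: bij_betw_def)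
    have n3: "3 \<le> CARD('n)" using k2 kn' by linarith
    define A where "A = f ` {3..<k+1}"
    define B where "B = f ` {k+1..<CARD('n)}"
    have fe: "f a = f b \<longleftrightarrow> a = b" if "a < CARD('n)" "b < CARD('n)" for a b
      using inj that by (auto simp: inj_on_def)
    have d: "f 0 \<noteq> f 1" "f 0 \<noteq> f 2" "f 1 \<noteq> f 2" using fe n3 by auto
    have nA: "f 0 \<notin> A" "f 1 \<notin> A" "f 2 \<notin> A" unfolding A_def using fe kn' by (auto simp: image_iff)
    have nB: "f 0 \<notin> B" "f 1 \<notin> B" "f 2 \<notin> B" unfolding B_def using fe n3 k2 by (auto simp: image_iff)
    have AB: "A \<inter> B = {}" unfolding A_def B_def using fe kn' by (auto simp: image_iff)
    have cover: "i \<in> {f 0, f 1, f 2} \<union> A \<union> B" for i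
    proof -
      obtain j where j: "j < CARD('n)" "i = f j" using surj by (metis UNIV_I atLeastLessThan_iff imageE)
      show ?thesis
      proof (cases "j < 3")
        case True then have "j = 0 \<or> j = 1 \<or> j = 2" by auto
        then show ?thesis using j by auto
      next
        case False
        then show ?thesis using j unfolding A_def B_def by (cases "j < k + 1") auto
      qed
    qed
    have cA: "card A = k - 2"
    proof -
      have "inj_on f {3..<k+1}" using inj_on_subset[OF inj] kn' by auto
      then show ?thesis unfolding A_def by (simp add: card_image)
    qed
    show ?thesis
      by (rule ex_b_ctx[OF d nA nB AB cover k2 cA])
  qed
  show ?thesis using P1 P2 P3 P4 by blast
qed

end
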